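(* Let $A$ be a symmetric Frobenius algebra over a commutative ring $\Bbbk$. Then its cyclic cohomology $HC^*_\lambda(A)$ (in the sense of Connes, computed by the cyclic cochains on $A$) is a graded Lie algebra of degree $-1$.
   Context: An algebra $A$ is a symmetric Frobenius algebra if there is an isomorphism of $A$-bimodules $\Theta:A\xrightarrow{\cong}A^\vee=\mathrm{Hom}_\Bbbk(A,\Bbbk)$. The cyclic cochains of $A$ are the linear forms $f$ on $A^{\otimes n+1}$ with $f(a_n,a_0,\dots,a_{n-1})=(-1)^nf(a_0,\dots,a_n)$, forming a subcomplex of the dual of the Hochschild chain complex; $HC^*_\lambda(A)$ is its cohomology. *)

theory Defs
  imports Main
begin

definition kalg :: "('k::comm_ring_1 \<Rightarrow> 'a::ring_1 \<Rightarrow> 'a) \<Rightarrow> bool" where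
  "kalg sm \<longleftrightarrow> (\<forall>x. sm 1 x = x) \<and> (\<forall>c d x. sm (c * d) x = sm c (sm d x))
     \<and> (\<forall>c d x. sm (c + d) x = sm c x + sm d x) \<and> (\<forall>c x y. sm c (x + y) = sm c x + sm c y)
     \<and> (\<forall>c x y. sm c (x * y) = sm c x * y) \<and> (\<forall>c x y. sm c (x * y) = x * sm c y)"

definition linform :: "('k::comm_ring_1 \<Rightarrow> 'a::ring_1 \<Rightarrow> 'a) \<Rightarrow> ('a \<Rightarrow> 'k) \<Rightarrow> bool" where
  "linform sm \<phi> \<longleftrightarrow> (\<forall>x y. \<phi> (x + y) = \<phi> x + \<phi> y) \<and> (\<forall>c x. \<phi> (sm c x) = c * \<phi> x)"

text \<open>Symmetric Frobenius algebra: an A-bimodule isomorphism Theta : A -> A^v, where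
  A^v carries the bimodule structure (a.phi.b)(y) = phi(b y a).\<close>
definition symm_frobenius :: "('k::comm_ring_1 \<Rightarrow> 'a::ring_1 \<Rightarrow> 'a) \<Rightarrow> ('a \<Rightarrow> 'a \<Rightarrow> 'k) \<Rightarrow> bool" where
  "symm_frobenius sm \<Theta> \<longleftrightarrow> kalg sm
     \<and> (\<forall>x y. \<Theta> (x + y) = (\<lambda>z. \<Theta> x z + \<Theta> y z))
     \<and> (\<forall>c x. \<Theta> (sm c x) = (\<lambda>z. c * \<Theta> x z))
     \<and> bij_betw \<Theta> UNIV {\<phi>. linform sm \<phi>}
     \<and> (\<forall>a b x y. \<Theta> (a * x * b) y = \<Theta> x (b * y * a))"

text \<open>n-cochains of the (dual) Hochschild complex: linear forms on A^{\<otimes> n+1}, represented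
  as k-multilinear functions on lists of length n+1 (and 0 on lists of any other length).\<close>
definition cochain :: "('k::comm_ring_1 \<Rightarrow> 'a::ring_1 \<Rightarrow> 'a) \<Rightarrow> nat \<Rightarrow> ('a list \<Rightarrow> 'k) \<Rightarrow> bool" where
  "cochain sm n f \<longleftrightarrow> (\<forall>xs. length xs \<noteq> Suc n \<longrightarrow> f xs = 0)
     \<and> (\<forall>xs i x y c. length xs = Suc n \<and> i \<le> n \<longrightarrow>
          f (xs[i := x + y]) = f (xs[i := x]) + f (xs[i := y])
        \<and> f (xs[i := sm c x]) = c * f (xs[i := x]))"

definition hoch_d :: "nat \<Rightarrow> ('a::ring_1 list \<Rightarrow> 'k::comm_ring_1) \<Rightarrow> 'a list \<Rightarrow> 'k" where
  "hoch_d n f xs = (if length xs = n + 2 then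
      (\<Sum>i\<le>n. (-1) ^ i * f (take i xs @ [xs ! i * xs ! Suc i] @ drop (i + 2) xs))
      + (-1) ^ (n + 1) * f ((xs ! (n + 1) * xs ! 0) # take n (drop 1 xs))
    else 0)"

definition cyclic_cochain :: "('k::comm_ring_1 \<Rightarrow> 'a::ring_1 \<Rightarrow> 'a) \<Rightarrow> nat \<Rightarrow> ('a list \<Rightarrow> 'k) \<Rightarrow> bool" where
  "cyclic_cochain sm n f \<longleftrightarrow> cochain sm n f
     \<and> (\<forall>xs. length xs = Suc n \<longrightarrow> f (last xs # butlast xs) = (-1) ^ n * f xs)"

definition cyc_cocycle :: "('k::comm_ring_1 \<Rightarrow> 'a::ring_1 \<Rightarrow> 'a) \<Rightarrow> nat \<Rightarrow> ('a list \<Rightarrow> 'k) \<Rightarrow> bool" where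
  "cyc_cocycle sm n f \<longleftrightarrow> cyclic_cochain sm n f \<and> (\<forall>xs. hoch_d n f xs = 0)"

text \<open>Coboundaries in the cyclic cochain complex (degree 0 has only the zero coboundary).\<close>
definition cyc_coboundary :: "('k::comm_ring_1 \<Rightarrow> 'a::ring_1 \<Rightarrow> 'a) \<Rightarrow> nat \<Rightarrow> ('a list \<Rightarrow> 'k) \<Rightarrow> bool" where
  "cyc_coboundary sm n f \<longleftrightarrow> (\<forall>xs. f xs = 0)
     \<or> (\<exists>k u. n = Suc k \<and> cyclic_cochain sm k u \<and> f = hoch_d k u)"

text \<open>Transport of an n-cochain f in C^n(A,A^v) to the Hochschild cochain in C^n(A,A)
  via Theta^{-1}: Theta(F(a_1..a_n))(a_0) = f(a_0,a_1,..,a_n).\<close>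
definition to_hoch :: "('a \<Rightarrow> 'a \<Rightarrow> 'k) \<Rightarrow> ('a list \<Rightarrow> 'k) \<Rightarrow> 'a list \<Rightarrow> 'a" where
  "to_hoch \<Theta> f ys = the_inv_into UNIV \<Theta> (\<lambda>a. f (a # ys))"

text \<open>The bracket of degree -1 on cyclic cochains: the Gerstenhaber bracket
  [F,G] = F o G - (-1)^{(n-1)(m-1)} G o F, F o G = sum_i (-1)^{(i-1)(m-1)} F o_i G,
  transported along Theta. Signs (-1)^{(n-1)(m-1)} are written with (n+1)(m+1) (same parity,
  avoids truncated subtraction). The result is an (n+m-1)-cochain (evaluated on n+m arguments).\<close>
definition cbr :: "('a::ring_1 \<Rightarrow> 'a \<Rightarrow> 'k::comm_ring_1) \<Rightarrow> nat \<Rightarrow> nat \<Rightarrow> ('a list \<Rightarrow> 'k) \<Rightarrow> ('a list \<Rightarrow> 'k) \<Rightarrow> 'a list \<Rightarrow> 'k" where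
  "cbr \<Theta> n m f g xs = (if length xs = n + m \<and> xs \<noteq> [] then
      (\<Sum>i<n. (-1) ^ (i * (m + 1)) *
         f (hd xs # take i (tl xs) @ [to_hoch \<Theta> g (take m (drop i (tl xs)))] @ drop (i + m) (tl xs)))
      - (-1) ^ ((n + 1) * (m + 1)) *
      (\<Sum>j<m. (-1) ^ (j * (n + 1)) *
         g (hd xs # take j (tl xs) @ [to_hoch \<Theta> f (take n (drop j (tl xs)))] @ drop (j + n) (tl xs)))
    else 0)"

end

theory Submission
  imports Defs
begin

definition ins :: "nat \<Rightarrow> ('a list \<Rightarrow> 'a) \<Rightarrow> nat \<Rightarrow> 'a list \<Rightarrow> 'a list" where
  "ins i G m ys = take i ys @ G (take m (drop i ys)) # drop (i + m) ys"

definition D2 :: "nat \<Rightarrow> ('a list \<Rightarrow> 'a) \<Rightarrow> nat \<Rightarrow> nat \<Rightarrow> ('a list \<Rightarrow> 'a) \<Rightarrow> nat \<Rightarrow> 'a list \<Rightarrow> 'a list" where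
  "D2 a X r b Y s ys = take a ys @ X (take r (drop a ys)) # take (b - a - 1) (drop (a + r) ys)
     @ Y (take s (drop (b - 1 + r) ys)) # drop (b - 1 + r + s) ys"

lemma length_ins: "i + m \<le> length ys \<Longrightarrow> length (ins i G m ys) = length ys + 1 - m"
  unfolding ins_def by simp

lemma ins_left:
  assumes "k < i" "k \<le> length ys"
  shows "ins i G m (ins k H p ys) = D2 k H p i G m ys"
proof -
  have t: "take i (take k ys @ x # R) = take k ys @ x # take (i - k - 1) R" for x R
    using assms by (simp add: min_def) (metis Suc_diff_Suc diff_Suc_eq_diff_pred take_Suc_Cons)
  have d: "drop i (take k ys @ x # R) = drop (i - k - 1) R" for x R
    using assms by (simp add: min_def) (metis Suc_diff_Suc diff_Suc_eq_diff_pred drop_Suc_Cons)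
  have d2: "drop (i + m) (take k ys @ x # R) = drop (i + m - k - 1) R" for x R
    using assms by (simp add: min_def) (metis Suc_diff_Suc add_diff_cancel_left' diff_Suc_eq_diff_pred drop_Suc_Cons le_add_diff_inverse2 less_imp_le_nat trans_less_add1)
  show ?thesis
    using assms unfolding ins_def D2_def t d d2
    by (simp add: add.commute add.left_commute)
qed

lemma ins_right:
  assumes "i + m \<le> k" "k \<le> length ys"
  shows "ins i G m (ins k H p ys) = D2 i G m (k - m + 1) H p ys"
proof -
  have e1: "take i (take k ys @ R) = take i ys" for R using assms by simp
  have e2: "take m (drop i (take k ys @ R)) = take m (drop i ys)" for R
    using assms by (simp add: take_drop)
  have e3: "drop (i + m) (take k ys @ R) = take (k - i - m) (drop (i + m) ys) @ R" for R
    using assms by (simp add: drop_take)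
  have e4: "k - m + 1 - i - 1 = k - i - m" "k - m + 1 - 1 + m = k" using assms by auto
  show ?thesis unfolding ins_def[of k] unfolding ins_def D2_def e1 e2 e3 e4 by simp
qed

lemma ins_mid:
  assumes "i \<le> k" "k < i + m" "k \<le> length ys"
  shows "ins i G m (ins k H p ys) = ins i (\<lambda>zs. G (ins (k - i) H p zs)) (m + p - 1) ys"
proof -
  have e1: "take i (take k ys @ R) = take i ys" for R using assms by simp
  have e2: "take m (drop i (take k ys @ x # R)) = take (k - i) (drop i ys) @ x # take (m - (k - i) - 1) R" for x R
  proof -
    have "drop i (take k ys @ x # R) = take (k-i) (drop i ys) @ x # R" using assms by (simp add: drop_take)
    moreover have "length (take (k-i) (drop i ys)) = k - i" using assms by simp
    ultimately show ?thesis using assms by (simp add: take_Cons')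
  qed
  have e3: "drop (i + m) (take k ys @ x # R) = drop (i + m - k - 1) R" for x R
    using assms by (simp add: drop_Cons')
  have e4: "take (k - i) (take (m + p - 1) (drop i ys)) = take (k - i) (drop i ys)" using assms by (simp add: min_def)
  have e5: "take p (drop (k - i) (take (m + p - 1) (drop i ys))) = take p (drop k ys)"
    using assms by (simp add: drop_take min_def)
  have e6: "drop (k - i + p) (take (m + p - 1) (drop i ys)) = take (m - (k - i) - 1) (drop (k + p) ys)"
    using assms by (simp add: drop_take add.commute diff_diff_left)
  have e7: "drop (i + m - k - 1) (drop (k + p) ys) = drop (i + (m + p - 1)) ys" using assms by simp
  show ?thesis
    unfolding ins_def[of k] unfolding ins_def e1 e2 e3 e4 e5 e6 using e7 by simp
qed

lemma sgn_eq: "even (a + b) \<Longrightarrow> (-1::'a::ring_1) ^ a = (-1) ^ b"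
  by (metis (no_types, lifting) even_add neg_one_even_power neg_one_odd_power)

lemma sgn_sq: "(-1::'a::ring_1) ^ a * (-1) ^ a = 1"
  by (metis power_add power_minus1_even mult_2 )

definition circ :: "nat \<Rightarrow> nat \<Rightarrow> ('a::ring_1 list \<Rightarrow> 'a) \<Rightarrow> ('a list \<Rightarrow> 'a) \<Rightarrow> 'a list \<Rightarrow> 'a" where
  "circ n m F G ys = (\<Sum>i<n. (-1) ^ (i * (m + 1)) * F (ins i G m ys))"

definition gb :: "nat \<Rightarrow> nat \<Rightarrow> ('a::ring_1 list \<Rightarrow> 'a) \<Rightarrow> ('a list \<Rightarrow> 'a) \<Rightarrow> 'a list \<Rightarrow> 'a" where
  "gb n m F G ys = circ n m F G ys - (-1) ^ ((n + 1) * (m + 1)) * circ m n G F ys"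

locale hoch =
  fixes sm :: "'k::comm_ring_1 \<Rightarrow> 'a::ring_1 \<Rightarrow> 'a"
  assumes kalg: "kalg sm"
begin

lemma sm1: "sm 1 x = x" and smmult: "sm (c * d) x = sm c (sm d x)"
  and smaddl: "sm (c + d) x = sm c x + sm d x" and smaddr: "sm c (x + y) = sm c x + sm c y"
  and smml: "sm c (x * y) = sm c x * y" and smmr: "sm c (x * y) = x * sm c y"
  using kalg unfolding kalg_def by auto

lemma sm0: "sm c 0 = 0"
  using smaddr[of c 0 0] by simp

lemma smneg: "sm c (- x) = - sm c x"
  using smaddr[of c x "-x"] sm0 by (metis add.commute eq_neg_iff_add_eq_0 add.right_inverse)

lemma smsgn: "sm c ((-1) ^ e * x) = (-1) ^ e * sm c x"
  by (rule smmr)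

lemma smsum: "sm c (sum f S) = sum (\<lambda>j. sm c (f j)) S"
  by (induction S rule: infinite_finite_induct) (auto simp: sm0 smaddr)

definition klin :: "('a \<Rightarrow> 'a) \<Rightarrow> bool" where
  "klin \<phi> \<longleftrightarrow> (\<forall>x y. \<phi> (x + y) = \<phi> x + \<phi> y) \<and> (\<forall>c x. \<phi> (sm c x) = sm c (\<phi> x))"

lemma klin_add: "klin \<phi> \<Longrightarrow> \<phi> (x + y) = \<phi> x + \<phi> y" by (simp add: klin_def)
lemma klin_sm: "klin \<phi> \<Longrightarrow> \<phi> (sm c x) = sm c (\<phi> x)" by (simp add: klin_def)
lemma klin_0: "klin \<phi> \<Longrightarrow> \<phi> 0 = 0"
  using klin_add[of \<phi> 0 0] by simp
lemma klin_neg: "klin \<phi> \<Longrightarrow> \<phi> (- x) = - \<phi> x"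
  using klin_add[of \<phi> x "-x"] klin_0[of \<phi>] by (metis add.commute eq_neg_iff_add_eq_0 add.right_inverse)
lemma klin_sgn: "klin \<phi> \<Longrightarrow> \<phi> ((-1) ^ e * x) = (-1) ^ e * \<phi> x"
  by (induction e) (auto simp: klin_neg)
lemma klin_sum: "klin \<phi> \<Longrightarrow> \<phi> (sum f S) = sum (\<lambda>j. \<phi> (f j)) S"
  by (induction S rule: infinite_finite_induct) (auto simp: klin_0 klin_add)
lemma klin_sgnsum: "klin \<phi> \<Longrightarrow> \<phi> (\<Sum>j\<in>S. (-1) ^ e j * f j) = (\<Sum>j\<in>S. (-1) ^ e j * \<phi> (f j))"
  by (simp add: klin_sum klin_sgn)

lemma klin_comp: "klin \<phi> \<Longrightarrow> klin \<psi> \<Longrightarrow> klin (\<lambda>x. \<phi> (\<psi> x))"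
  by (simp add: klin_def)
lemma klin_addf: "klin \<phi> \<Longrightarrow> klin \<psi> \<Longrightarrow> klin (\<lambda>x. \<phi> x + \<psi> x)"
  by (simp add: klin_def smaddr algebra_simps)
lemma klin_zero: "klin (\<lambda>x. 0)"
  by (simp add: klin_def sm0)
lemma klin_sgnf: "klin \<phi> \<Longrightarrow> klin (\<lambda>x. (-1) ^ e * \<phi> x)"
  by (simp add: klin_def smmr algebra_simps)
lemma klin_negf: "klin \<phi> \<Longrightarrow> klin (\<lambda>x. - \<phi> x)"
  by (simp add: klin_def smneg algebra_simps)
lemma klin_sumf: "(\<And>j. j \<in> S \<Longrightarrow> klin (\<phi> j)) \<Longrightarrow> klin (\<lambda>x. \<Sum>j\<in>S. \<phi> j x)"
  by (induction S rule: infinite_finite_induct) (auto simp: klin_zero klin_addf)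

definition hc :: "nat \<Rightarrow> ('a list \<Rightarrow> 'a) \<Rightarrow> bool" where
  "hc n F \<longleftrightarrow> (\<forall>ys. length ys \<noteq> n \<longrightarrow> F ys = 0)
     \<and> (\<forall>us ws. length us + length ws + 1 = n \<longrightarrow> klin (\<lambda>v. F (us @ v # ws)))"

lemma hc_zero: "hc n F \<Longrightarrow> length ys \<noteq> n \<Longrightarrow> F ys = 0" by (simp add: hc_def)
lemma hc_klin: "hc n F \<Longrightarrow> length us + length ws + 1 = n \<Longrightarrow> klin (\<lambda>v. F (us @ v # ws))"
  by (simp add: hc_def)

end

lemma ins_slot_before: "length us = r \<Longrightarrow> r < i \<Longrightarrow>
   ins i G m (us @ v # ws) = us @ v # ins (i - r - 1) G m ws"
  unfolding ins_def
  by (simp add: take_Cons' drop_Cons')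

lemma ins_slot_after: "i + m \<le> length us \<Longrightarrow> ins i G m (us @ v # ws) = ins i G m us @ v # ws"
  unfolding ins_def by simp

lemma ins_slot_in: "i \<le> length us \<Longrightarrow> length us < i + m \<Longrightarrow>
   ins i G m (us @ v # ws) = take i us @ G (drop i us @ v # take (i + m - length us - 1) ws) # drop (i + m - length us - 1) ws"
  unfolding ins_def by (simp add: take_Cons' drop_Cons') (simp add: add.commute)

context hoch begin

lemma hc_zero_slot: "hc n F \<Longrightarrow> F (us @ 0 # ws) = 0"
proof (cases "length us + length ws + 1 = n")
  case True
  assume "hc n F"
  from klin_0[OF hc_klin[OF this True]] show ?thesis .
next
  case False
  assume "hc n F"
  from hc_zero[OF this] False show ?thesis by simp
qed

lemma hc_circ:
  assumes F: "hc n F" and G: "hc m G"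
  shows "hc (n + m - 1) (circ n m F G)"
  unfolding hc_def
proof (intro conjI allI impI)
  fix ys :: "'a list" assume len: "length ys \<noteq> n + m - 1"
  have "F (ins i G m ys) = 0" if "i < n" for i
  proof (cases "i + m \<le> length ys")
    case True
    then have "length (ins i G m ys) \<noteq> n" using len length_ins[OF True, of G] that by auto
    then show ?thesis using F hc_zero by blast
  next
    case False
    show ?thesis
    proof (cases "length (take m (drop i ys)) = m")
      case True
      then have "m = 0" "length ys < i" using False by auto
      then have "length (ins i G m ys) \<noteq> n" using len unfolding ins_def by simp
      then show ?thesis using F hc_zero by blast
    next
      case f2: False
      then have "G (take m (drop i ys)) = 0" using hc_zero[OF G] by blast
      then show ?thesis unfolding ins_def using hc_zero_slot[OF F] by simp
    qed
  qed
  then show "circ n m F G ys = 0" unfolding circ_def by simp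
next
  fix us ws :: "'a list" assume len: "length us + length ws + 1 = n + m - 1"
  have "klin (\<lambda>v. F (ins i G m (us @ v # ws)))" if i: "i < n" for i
  proof -
    consider "length us < i" | "i + m \<le> length us" | "i \<le> length us \<and> length us < i + m" by linarith
    then show ?thesis
    proof cases
      case 1
      have l: "length (ins (i - length us - 1) G m ws) = length ws + 1 - m"
        by (rule length_ins) (use 1 i len in linarith)
      show ?thesis unfolding ins_slot_before[OF refl 1]
        by (rule hc_klin[OF F]) (use l 1 i len in simp)
    next
      case 2
      have l: "length (ins i G m us) = length us + 1 - m" by (rule length_ins[OF 2])
      show ?thesis unfolding ins_slot_after[OF 2]
        by (rule hc_klin[OF F]) (use l 2 i len in simp)
    next
      case 3
      show ?thesis unfolding ins_slot_in[OF conjunct1[OF 3] conjunct2[OF 3]]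
        apply (rule klin_comp[where \<phi>="\<lambda>x. F (take i us @ x # drop (i + m - length us - 1) ws)"])
         apply (rule hc_klin[OF F]) using 3 i len apply simp
        apply (rule hc_klin[OF G]) using 3 i len apply simp
        done
    qed
  qed
  then show "klin (\<lambda>v. circ n m F G (us @ v # ws))" unfolding circ_def
    by (intro klin_sumf klin_sgnf) (simp only: lessThan_iff)
qed

lemma hc_lc:
  assumes "hc N X" "hc N Y"
  shows "hc N (\<lambda>ys. X ys - (-1) ^ e * Y ys)"
proof -
  have "klin (\<lambda>v. X (us @ v # ws) - (-1) ^ e * Y (us @ v # ws))" if "length us + length ws + 1 = N" for us ws
  proof -
    have "klin (\<lambda>v. X (us @ v # ws) + (-1) ^ (Suc e) * Y (us @ v # ws))"
      by (intro klin_addf klin_sgnf hc_klin[OF assms(1)] hc_klin[OF assms(2)]) (use that in auto)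
    then show ?thesis by simp
  qed
  then show ?thesis using assms unfolding hc_def by auto
qed

lemma hc_gb: "hc n F \<Longrightarrow> hc m G \<Longrightarrow> hc (n + m - 1) (gb n m F G)"
proof -
  assume a: "hc n F" "hc m G"
  have "hc (n + m - 1) (circ m n G F)" using hc_circ[OF a(2) a(1)] by (simp add: add.commute)
  from hc_lc[OF hc_circ[OF a] this] show ?thesis unfolding gb_def .
qed

lemma circ_circ_right:
  assumes F: "hc n F" and G: "hc m G" and H: "hc p H" and len: "length ys = n + m + p - 2"
    and np: "2 \<le> n + m + p"
  shows "circ n (m + p - 1) F (circ m p G H) ys =
    (\<Sum>i<n. \<Sum>j<m. (-1) ^ (i * (m + p - 1 + 1)) * (-1) ^ (j * (p + 1)) *
        F (ins i (\<lambda>zs. G (ins j H p zs)) (m + p - 1) ys))"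
proof (cases "m = 0")
  case True
  then show ?thesis unfolding circ_def ins_def using hc_zero_slot[OF F] by simp
next
  case False
  have *: "F (ins i (circ m p G H) (m + p - 1) ys) =
        (\<Sum>j<m. (-1) ^ (j * (p + 1)) * F (ins i (\<lambda>zs. G (ins j H p zs)) (m + p - 1) ys))" if "i < n" for i
  proof -
    have k: "klin (\<lambda>v. F (take i ys @ v # drop (i + (m + p - 1)) ys))"
      by (rule hc_klin[OF F]) (use that False len in simp)
    show ?thesis unfolding ins_def[of i] circ_def klin_sgnsum[OF k] by simp
  qed
  have mp: "m + p - 1 + 1 = m + p" using False by simp
  show ?thesis unfolding circ_def[of n] mp
    apply (rule sum.cong[OF refl])
    subgoal for i by (simp only: lessThan_iff * sum_distrib_left mult.assoc)
    done
qed

end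

lemma sum_lessThan_add: "(\<Sum>k<a + (b::nat). f k) = (\<Sum>k<a. f k) + (\<Sum>k<b. f (a + k))"
  by (induction b) (simp_all add: add.assoc)

lemma triangle_swap: "(\<Sum>a<(n::nat). \<Sum>k<n - 1 - a. f a (a + 1 + k)) = (\<Sum>b<n. \<Sum>a<b. f a b)"
proof (induction n)
  case 0 then show ?case by simp
next
  case (Suc n)
  have "(\<Sum>k<Suc n - 1 - a. f a (a + 1 + k)) = (\<Sum>k<n - 1 - a. f a (a + 1 + k)) + f a n" if "a < n" for a
  proof -
    have "Suc n - 1 - a = Suc (n - 1 - a)" using that by simp
    then show ?thesis using that by simp
  qed
  then have "(\<Sum>a<n. \<Sum>k<Suc n - 1 - a. f a (a + 1 + k)) = (\<Sum>a<n. \<Sum>k<n - 1 - a. f a (a + 1 + k)) + (\<Sum>a<n. f a n)"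
    by (simp add: sum.distrib)
  then show ?case using Suc by simp
qed

definition NN :: "nat \<Rightarrow> nat \<Rightarrow> nat \<Rightarrow> ('a::ring_1 list \<Rightarrow> 'a) \<Rightarrow> ('a list \<Rightarrow> 'a) \<Rightarrow> ('a list \<Rightarrow> 'a) \<Rightarrow> 'a list \<Rightarrow> 'a" where
  "NN n m p F G H ys = (\<Sum>a<n. \<Sum>b<a. (-1) ^ (b * (p + 1)) * (-1) ^ (a * (m + 1)) * F (D2 b H p a G m ys))
     + (\<Sum>a<n. \<Sum>k<n - 1 - a. (-1) ^ ((a + m + k) * (p + 1)) * (-1) ^ (a * (m + 1)) * F (D2 a G m (a + 1 + k) H p ys))"

lemma NN_sym: "NN n m p F G H ys = (-1) ^ ((m + 1) * (p + 1)) * NN n p m F H G ys"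
proof -
  define \<sigma> where "\<sigma> = ((-1::'a) ^ ((m + 1) * (p + 1)))"
  have P2: "(\<Sum>a<n. \<Sum>k<n - 1 - a. (-1) ^ ((a + m + k) * (p + 1)) * (-1) ^ (a * (m + 1)) * F (D2 a G m (a + 1 + k) H p ys))
    = \<sigma> * (\<Sum>a<n. \<Sum>b<a. (-1) ^ (b * (m + 1)) * (-1) ^ (a * (p + 1)) * F (D2 b G m a H p ys))"
  proof -
    have "(\<Sum>a<n. \<Sum>k<n - 1 - a. (-1) ^ ((a + m + k) * (p + 1)) * (-1) ^ (a * (m + 1)) * F (D2 a G m (a + 1 + k) H p ys))
      = (\<Sum>b<n. \<Sum>a<b. (-1) ^ ((b - 1 + m) * (p + 1)) * (-1) ^ (a * (m + 1)) * F (D2 a G m b H p ys))"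
      using triangle_swap[where n=n and f="\<lambda>a b. (-1) ^ ((b - 1 + m) * (p + 1)) * (-1) ^ (a * (m + 1)) * F (D2 a G m b H p ys)"]
      by (simp add: add.commute add.left_commute)
    also have "\<dots> = (\<Sum>b<n. \<Sum>a<b. \<sigma> * ((-1) ^ (a * (m + 1)) * (-1) ^ (b * (p + 1)) * F (D2 a G m b H p ys)))"
    proof (intro sum.cong refl)
      fix b a assume "b \<in> {..<n}" "a \<in> {..<b}"
      then obtain c where c: "b = Suc c" by (cases b) auto
      have "(-1::'a) ^ ((b - 1 + m) * (p + 1)) * (-1) ^ (a * (m + 1)) = \<sigma> * ((-1) ^ (a * (m + 1)) * (-1) ^ (b * (p + 1)))"
        unfolding \<sigma>_def power_add[symmetric] mult.assoc[symmetric]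
        by (rule sgn_eq) (auto simp: c even_add even_mult_iff)
      then show "(-1) ^ ((b - 1 + m) * (p + 1)) * (-1) ^ (a * (m + 1)) * F (D2 a G m b H p ys) =
          \<sigma> * ((-1) ^ (a * (m + 1)) * (-1) ^ (b * (p + 1)) * F (D2 a G m b H p ys))"
        by (simp add: mult.assoc)
    qed
    finally show ?thesis by (simp add: sum_distrib_left)
  qed
  have P1: "(\<Sum>a<n. \<Sum>b<a. (-1) ^ (b * (p + 1)) * (-1) ^ (a * (m + 1)) * F (D2 b H p a G m ys))
    = \<sigma> * (\<Sum>a<n. \<Sum>k<n - 1 - a. (-1) ^ ((a + p + k) * (m + 1)) * (-1) ^ (a * (p + 1)) * F (D2 a H p (a + 1 + k) G m ys))"
  proof -
    have "(\<Sum>a<n. \<Sum>k<n - 1 - a. (-1) ^ ((a + p + k) * (m + 1)) * (-1) ^ (a * (p + 1)) * F (D2 a H p (a + 1 + k) G m ys))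
      = (\<Sum>b<n. \<Sum>a<b. (-1) ^ ((b - 1 + p) * (m + 1)) * (-1) ^ (a * (p + 1)) * F (D2 a H p b G m ys))"
      using triangle_swap[where n=n and f="\<lambda>a b. (-1) ^ ((b - 1 + p) * (m + 1)) * (-1) ^ (a * (p + 1)) * F (D2 a H p b G m ys)"]
      by (simp add: add.commute add.left_commute)
    also have "\<dots> = (\<Sum>b<n. \<Sum>a<b. \<sigma> * ((-1) ^ (a * (p + 1)) * (-1) ^ (b * (m + 1)) * F (D2 a H p b G m ys)))"
    proof (intro sum.cong refl)
      fix b a assume "b \<in> {..<n}" "a \<in> {..<b}"
      then obtain c where c: "b = Suc c" by (cases b) auto
      have "(-1::'a) ^ ((b - 1 + p) * (m + 1)) * (-1) ^ (a * (p + 1)) = \<sigma> * ((-1) ^ (a * (p + 1)) * (-1) ^ (b * (m + 1)))"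
        unfolding \<sigma>_def power_add[symmetric] mult.assoc[symmetric]
        by (rule sgn_eq) (auto simp: c even_add even_mult_iff)
      then show "(-1) ^ ((b - 1 + p) * (m + 1)) * (-1) ^ (a * (p + 1)) * F (D2 a H p b G m ys) =
          \<sigma> * ((-1) ^ (a * (p + 1)) * (-1) ^ (b * (m + 1)) * F (D2 a H p b G m ys))"
        by (simp add: mult.assoc)
    qed
    finally have "(\<Sum>a<n. \<Sum>k<n - 1 - a. (-1) ^ ((a + p + k) * (m + 1)) * (-1) ^ (a * (p + 1)) * F (D2 a H p (a + 1 + k) G m ys))
       = \<sigma> * (\<Sum>a<n. \<Sum>b<a. (-1) ^ (b * (p + 1)) * (-1) ^ (a * (m + 1)) * F (D2 b H p a G m ys))"
      by (simp add: sum_distrib_left)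
    then have "\<sigma> * (\<Sum>a<n. \<Sum>k<n - 1 - a. (-1) ^ ((a + p + k) * (m + 1)) * (-1) ^ (a * (p + 1)) * F (D2 a H p (a + 1 + k) G m ys))
       = \<sigma> * \<sigma> * (\<Sum>a<n. \<Sum>b<a. (-1) ^ (b * (p + 1)) * (-1) ^ (a * (m + 1)) * F (D2 b H p a G m ys))"
      by (simp add: mult.assoc)
    moreover have "\<sigma> * \<sigma> = 1" unfolding \<sigma>_def by (rule sgn_sq)
    ultimately show ?thesis by simp
  qed
  show ?thesis unfolding NN_def P1 P2 \<sigma>_def[symmetric] by (simp add: algebra_simps)
qed

lemma circ_circ_left:
  assumes len: "n + m \<le> length ys + 2"
  shows "circ (n + m - 1) p (circ n m F G) H ys =
    (\<Sum>a<n. \<Sum>b<a. (-1) ^ (b * (p + 1)) * (-1) ^ (a * (m + 1)) * F (D2 b H p a G m ys))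
    + (\<Sum>i<n. \<Sum>j<m. (-1) ^ (i * (m + p - 1 + 1)) * (-1) ^ (j * (p + 1)) *
        F (ins i (\<lambda>zs. G (ins j H p zs)) (m + p - 1) ys))
    + (\<Sum>a<n. \<Sum>k<n - 1 - a. (-1) ^ ((a + m + k) * (p + 1)) * (-1) ^ (a * (m + 1)) * F (D2 a G m (a + 1 + k) H p ys))"
proof -
  have "circ (n + m - 1) p (circ n m F G) H ys =
     (\<Sum>i<n. \<Sum>k<n + m - 1. (-1) ^ (k * (p + 1)) * (-1) ^ (i * (m + 1)) * F (ins i G m (ins k H p ys)))"
    unfolding circ_def by (simp add: sum_distrib_left mult.assoc sum.swap[of _ "{..<n}"])
  also have "\<dots> = (\<Sum>i<n. (\<Sum>b<i. (-1) ^ (b * (p + 1)) * (-1) ^ (i * (m + 1)) * F (D2 b H p i G m ys))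
    + (\<Sum>j<m. (-1) ^ (i * (m + p - 1 + 1)) * (-1) ^ (j * (p + 1)) *
        F (ins i (\<lambda>zs. G (ins j H p zs)) (m + p - 1) ys))
    + (\<Sum>k<n - 1 - i. (-1) ^ ((i + m + k) * (p + 1)) * (-1) ^ (i * (m + 1)) * F (D2 i G m (i + 1 + k) H p ys)))"
    apply (rule sum.cong[OF refl])
    subgoal premises i for i
    proof -
    define \<phi> where "\<phi> k = (-1) ^ (k * (p + 1)) * (-1) ^ (i * (m + 1)) * F (ins i G m (ins k H p ys))" for k
    have e: "n + m - 1 = i + (m + (n - 1 - i))" using i by auto
    have A: "(\<Sum>k<i. \<phi> k) = (\<Sum>b<i. (-1) ^ (b * (p + 1)) * (-1) ^ (i * (m + 1)) * F (D2 b H p i G m ys))"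
    proof (rule sum.cong[OF refl])
      fix k assume "k \<in> {..<i}"
      then show "\<phi> k = (-1) ^ (k * (p + 1)) * (-1) ^ (i * (m + 1)) * F (D2 k H p i G m ys)"
        unfolding \<phi>_def using ins_left[of k i ys G m H p] i len by simp
    qed
    have B: "(\<Sum>j<m. \<phi> (i + j)) = (\<Sum>j<m. (-1) ^ (i * (m + p - 1 + 1)) * (-1) ^ (j * (p + 1)) *
        F (ins i (\<lambda>zs. G (ins j H p zs)) (m + p - 1) ys))"
    proof (rule sum.cong[OF refl])
      fix j assume j: "j \<in> {..<m}"
      have s: "(-1::'a) ^ ((i + j) * (p + 1)) * (-1) ^ (i * (m + 1)) = (-1) ^ (i * (m + p - 1 + 1)) * (-1) ^ (j * (p + 1))"
      proof -
        have "m + p - 1 + 1 = m + p" using j by auto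
        then show ?thesis unfolding power_add[symmetric]
          by (intro sgn_eq) (auto simp: even_add even_mult_iff algebra_simps)
      qed
      show "\<phi> (i + j) = (-1) ^ (i * (m + p - 1 + 1)) * (-1) ^ (j * (p + 1)) * F (ins i (\<lambda>zs. G (ins j H p zs)) (m + p - 1) ys)"
        unfolding \<phi>_def using ins_mid[of i "i + j" m ys G H p] i j len s by simp
    qed
    have C: "(\<Sum>k<n - 1 - i. \<phi> (i + (m + k))) = (\<Sum>k<n - 1 - i. (-1) ^ ((i + m + k) * (p + 1)) * (-1) ^ (i * (m + 1)) * F (D2 i G m (i + 1 + k) H p ys))"
    proof (rule sum.cong[OF refl])
      fix k assume k: "k \<in> {..<n - 1 - i}"
      have e2: "i + (m + k) - m + 1 = i + 1 + k" by simp
      show "\<phi> (i + (m + k)) = (-1) ^ ((i + m + k) * (p + 1)) * (-1) ^ (i * (m + 1)) * F (D2 i G m (i + 1 + k) H p ys)"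
        unfolding \<phi>_def using ins_right[of i m "i + (m + k)" ys G H p] i k len e2 by (simp add: add.assoc)
    qed
    have "(\<Sum>k<n + m - 1. \<phi> k) = (\<Sum>k<i. \<phi> k) + (\<Sum>j<m. \<phi> (i + j)) + (\<Sum>k<n - 1 - i. \<phi> (i + (m + k)))"
      unfolding e sum_lessThan_add by (simp add: add.assoc)
    from this[unfolded A B C] show ?thesis unfolding \<phi>_def .
  qed
  done
  finally show ?thesis by (simp add: sum.distrib)
qed

lemma preLie_raw:
  assumes len: "n + m \<le> length ys + 2"
    and R: "circ n (m + p - 1) F (circ m p G H) ys =
    (\<Sum>i<n. \<Sum>j<m. (-1) ^ (i * (m + p - 1 + 1)) * (-1) ^ (j * (p + 1)) *
        F (ins i (\<lambda>zs. G (ins j H p zs)) (m + p - 1) ys))"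
  shows "circ (n + m - 1) p (circ n m F G) H ys - circ n (m + p - 1) F (circ m p G H) ys = NN n m p F G H ys"
  unfolding circ_circ_left[OF len] R NN_def by (simp add: algebra_simps)

lemma jac_alg:
  fixes F_GH F_HG GH_F HG_F G_HF G_FH HF_G FH_G H_FG H_GF FG_H GF_H :: "'a::ring_1"
  assumes RF: "FG_H = F_GH + (-1) ^ ((m + 1) * (p + 1)) * (FH_G - F_HG)"
    and RG: "GH_F = G_HF + (-1) ^ ((p + 1) * (n + 1)) * (GF_H - G_FH)"
    and RH: "HF_G = H_FG + (-1) ^ ((n + 1) * (m + 1)) * (HG_F - H_GF)"
  shows "(-1) ^ ((n + 1) * (p + 1)) * (F_GH - (-1) ^ ((m + 1) * (p + 1)) * F_HG - (-1) ^ ((n + 1) * (m + p)) * (GH_F - (-1) ^ ((m + 1) * (p + 1)) * HG_F))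
  + (-1) ^ ((m + 1) * (n + 1)) * (G_HF - (-1) ^ ((p + 1) * (n + 1)) * G_FH - (-1) ^ ((m + 1) * (p + n)) * (HF_G - (-1) ^ ((p + 1) * (n + 1)) * FH_G))
  + (-1) ^ ((p + 1) * (m + 1)) * (H_FG - (-1) ^ ((n + 1) * (m + 1)) * H_GF - (-1) ^ ((p + 1) * (n + m)) * (FG_H - (-1) ^ ((n + 1) * (m + 1)) * GF_H)) = 0"
  unfolding RF RG RH
  by (cases "even n"; cases "even m"; cases "even p"; simp add: even_add even_mult_iff algebra_simps)

lemma sgn_lcomm: "(-1::'a::ring_1) ^ a * ((-1) ^ b * y) = (-1) ^ b * ((-1) ^ a * y)"
  by (simp add: mult.assoc[symmetric] power_add[symmetric] add.commute)

lemma circ_lin1: "circ q n (\<lambda>z. X z - (-1) ^ e * Y z) F ys = circ q n X F ys - (-1) ^ e * circ q n Y F ys"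
  unfolding circ_def ins_def by (simp add: sum_subtractf sum_distrib_left algebra_simps sgn_lcomm)

lemma circ_zero1: "circ q n (\<lambda>z. 0) F ys = 0"
  unfolding circ_def by simp

context hoch begin

lemma circ_lin2:
  assumes F: "hc n F"
  shows "circ n q F (\<lambda>z. X z - (-1) ^ e * Y z) ys = circ n q F X ys - (-1) ^ e * circ n q F Y ys"
proof -
  have "F (ins i (\<lambda>z. X z - (-1) ^ e * Y z) q ys) = F (ins i X q ys) - (-1) ^ e * F (ins i Y q ys)" for i
  proof (cases "length (take i ys) + length (drop (i + q) ys) + 1 = n")
    case True
    have k: "klin (\<lambda>v. F (take i ys @ v # drop (i + q) ys))" by (rule hc_klin[OF F True])
    have sx: "X z - (-1) ^ e * Y z = X z + (-1) ^ Suc e * Y z" for z by simp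
    have "F (take i ys @ (X z - (-1) ^ e * Y z) # drop (i + q) ys) =
       F (take i ys @ X z # drop (i + q) ys) + (-1) ^ Suc e * F (take i ys @ Y z # drop (i + q) ys)" for z
      unfolding sx by (simp only: klin_add[OF k] klin_sgn[OF k])
    then show ?thesis unfolding ins_def by simp
  next
    case False
    then show ?thesis unfolding ins_def using hc_zero[OF F] by simp
  qed
  then show ?thesis unfolding circ_def
    by (simp only: ) (simp add: right_diff_distrib sum_subtractf sum_distrib_left sgn_lcomm)
qed

lemma circ_zero2: "hc n F \<Longrightarrow> circ n q F (\<lambda>z. 0) ys = 0"
  unfolding circ_def ins_def using hc_zero_slot[of n F] by simp

lemma preLie:
  assumes F: "hc n F" and G: "hc m G" and H: "hc p H" and len: "length ys = n + m + p - 2"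
    and np: "2 \<le> n + m + p"
  shows "circ (n + m - 1) p (circ n m F G) H ys - circ n (m + p - 1) F (circ m p G H) ys = NN n m p F G H ys"
  by (rule preLie_raw) (use len np circ_circ_right[OF F G H len np] in auto)

lemma bexp:
  assumes F: "hc n F" and G: "hc m G" and H: "hc p H"
  shows "gb n (m + p - 1) F (gb m p G H) ys = circ n (m + p - 1) F (circ m p G H) ys
     - (-1) ^ ((m + 1) * (p + 1)) * circ n (m + p - 1) F (circ p m H G) ys
     - (-1) ^ ((n + 1) * (m + p - 1 + 1)) * (circ (m + p - 1) n (circ m p G H) F ys
        - (-1) ^ ((m + 1) * (p + 1)) * circ (m + p - 1) n (circ p m H G) F ys)"
  unfolding gb_def[of n] unfolding gb_def circ_lin1 circ_lin2[OF F] ..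

lemma bexp':
  assumes F: "hc n F" and G: "hc m G" and H: "hc p H"
  shows "gb n (m + p - 1) F (gb m p G H) ys = circ n (m + p - 1) F (circ m p G H) ys
     - (-1) ^ ((m + 1) * (p + 1)) * circ n (m + p - 1) F (circ p m H G) ys
     - (-1) ^ ((n + 1) * (m + p)) * (circ (m + p - 1) n (circ m p G H) F ys
        - (-1) ^ ((m + 1) * (p + 1)) * circ (m + p - 1) n (circ p m H G) F ys)"
proof (cases "m + p = 0")
  case True
  then have "circ m p G H = (\<lambda>z. 0)" "circ p m H G = (\<lambda>z. 0)" by (auto simp: circ_def)
  then show ?thesis unfolding bexp[OF F G H] by (simp add: circ_zero1)
next
  case False
  then have "m + p - 1 + 1 = m + p" by simp
  then show ?thesis unfolding bexp[OF F G H] by simp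
qed

lemma jacobi_hc:
  assumes F: "hc n F" and G: "hc m G" and H: "hc p H" and len: "length ys = n + m + p - 2"
    and np: "2 \<le> n + m + p"
  shows "(-1) ^ ((n + 1) * (p + 1)) * gb n (m + p - 1) F (gb m p G H) ys
    + (-1) ^ ((m + 1) * (n + 1)) * gb m (p + n - 1) G (gb p n H F) ys
    + (-1) ^ ((p + 1) * (m + 1)) * gb p (n + m - 1) H (gb n m F G) ys = 0"
proof -
  have L1: "circ (n + m - 1) p (circ n m F G) H ys - circ n (m + p - 1) F (circ m p G H) ys = NN n m p F G H ys"
    by (rule preLie[OF F G H len np])
  have L2: "circ (p + n - 1) m (circ n p F H) G ys - circ n (m + p - 1) F (circ p m H G) ys = NN n p m F H G ys"
    using preLie[OF F H G _ , of ys] len np by (simp add: add.commute add.left_commute)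
  have L3: "circ (m + p - 1) n (circ m p G H) F ys - circ m (p + n - 1) G (circ p n H F) ys = NN m p n G H F ys"
    using preLie[OF G H F _ , of ys] len np by (simp add: add.commute add.left_commute)
  have L4: "circ (n + m - 1) p (circ m n G F) H ys - circ m (p + n - 1) G (circ n p F H) ys = NN m n p G F H ys"
    using preLie[OF G F H _ , of ys] len np by (simp add: add.commute add.left_commute)
  have L5: "circ (p + n - 1) m (circ p n H F) G ys - circ p (n + m - 1) H (circ n m F G) ys = NN p n m H F G ys"
    using preLie[OF H F G _ , of ys] len np by (simp add: add.commute add.left_commute)
  have L6: "circ (m + p - 1) n (circ p m H G) F ys - circ p (n + m - 1) H (circ m n G F) ys = NN p m n H G F ys"
    using preLie[OF H G F _ , of ys] len np by (simp add: add.commute add.left_commute)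
  have b2: "gb m (p + n - 1) G (gb p n H F) ys = circ m (p + n - 1) G (circ p n H F) ys
     - (-1) ^ ((p + 1) * (n + 1)) * circ m (p + n - 1) G (circ n p F H) ys
     - (-1) ^ ((m + 1) * (p + n)) * (circ (p + n - 1) m (circ p n H F) G ys
        - (-1) ^ ((p + 1) * (n + 1)) * circ (p + n - 1) m (circ n p F H) G ys)"
    by (rule bexp'[OF G H F])
  have b3: "gb p (n + m - 1) H (gb n m F G) ys = circ p (n + m - 1) H (circ n m F G) ys
     - (-1) ^ ((n + 1) * (m + 1)) * circ p (n + m - 1) H (circ m n G F) ys
     - (-1) ^ ((p + 1) * (n + m)) * (circ (n + m - 1) p (circ n m F G) H ys
        - (-1) ^ ((n + 1) * (m + 1)) * circ (n + m - 1) p (circ m n G F) H ys)"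
    by (rule bexp'[OF H F G])
  show ?thesis unfolding bexp'[OF F G H] b2 b3
  proof (rule jac_alg)
    show "circ (n + m - 1) p (circ n m F G) H ys = circ n (m + p - 1) F (circ m p G H) ys
      + (-1) ^ ((m + 1) * (p + 1)) * (circ (p + n - 1) m (circ n p F H) G ys - circ n (m + p - 1) F (circ p m H G) ys)"
      using L1 L2 NN_sym[of n m p F G H ys] by (simp add: algebra_simps)
    show "circ (m + p - 1) n (circ m p G H) F ys = circ m (p + n - 1) G (circ p n H F) ys
      + (-1) ^ ((p + 1) * (n + 1)) * (circ (n + m - 1) p (circ m n G F) H ys - circ m (p + n - 1) G (circ n p F H) ys)"
      using L3 L4 NN_sym[of m p n G H F ys] by (simp add: algebra_simps)
    show "circ (p + n - 1) m (circ p n H F) G ys = circ p (n + m - 1) H (circ n m F G) ys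
      + (-1) ^ ((n + 1) * (m + 1)) * (circ (m + p - 1) n (circ p m H G) F ys - circ p (n + m - 1) H (circ m n G F) ys)"
      using L5 L6 NN_sym[of p n m H F G ys] by (simp add: algebra_simps)
  qed
qed

end

locale frob = hoch sm for sm :: "'k::comm_ring_1 \<Rightarrow> 'a::ring_1 \<Rightarrow> 'a" +
  fixes \<Theta> :: "'a \<Rightarrow> 'a \<Rightarrow> 'k"
  assumes sf: "symm_frobenius sm \<Theta>"
begin

lemma Th_add: "\<Theta> (x + y) z = \<Theta> x z + \<Theta> y z"
  using sf unfolding symm_frobenius_def by metis
lemma Th_sm: "\<Theta> (sm c x) z = c * \<Theta> x z"
  using sf unfolding symm_frobenius_def by metis
lemma Th_bij: "bij_betw \<Theta> UNIV {\<phi>. linform sm \<phi>}"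
  using sf unfolding symm_frobenius_def by blast
lemma Th_bim: "\<Theta> (a * x * b) y = \<Theta> x (b * y * a)"
  using sf unfolding symm_frobenius_def by blast
lemma Th_inj: "inj \<Theta>" using Th_bij bij_betw_def by blast
lemma Th_lf: "linform sm (\<Theta> x)" using Th_bij bij_betwE by blast
lemma Th_radd: "\<Theta> x (y + z) = \<Theta> x y + \<Theta> x z" using Th_lf unfolding linform_def by blast
lemma Th_rsm: "\<Theta> x (sm c y) = c * \<Theta> x y" using Th_lf unfolding linform_def by blast

lemma Th_0: "\<Theta> 0 z = 0"
  using Th_add[of 0 0 z] by simp
lemma Th_0f: "\<Theta> 0 = (\<lambda>z. 0)" using Th_0 by auto
lemma Th_neg: "\<Theta> (- x) z = - \<Theta> x z"
  using Th_add[of x "-x" z] Th_0 by (metis add.commute eq_neg_iff_add_eq_0 add.right_inverse)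
lemma Th_sgn: "\<Theta> ((-1) ^ e * x) z = (-1) ^ e * \<Theta> x z"
  by (induction e) (simp_all add: Th_neg)
lemma Th_sum: "\<Theta> (sum h S) z = (\<Sum>j\<in>S. \<Theta> (h j) z)"
  by (induction S rule: infinite_finite_induct) (simp_all add: Th_0 Th_add)
lemma Th_diff_sgn: "\<Theta> (x - (-1) ^ e * y) z = \<Theta> x z - (-1) ^ e * \<Theta> y z"
proof -
  have "x - (-1) ^ e * y = x + (-1) ^ Suc e * y" by simp
  then show ?thesis by (simp only: Th_add Th_sgn) simp
qed
lemma Th_sgnsum: "\<Theta> (\<Sum>j\<in>S. (-1) ^ h j * X j) z = (\<Sum>j\<in>S. (-1) ^ h j * \<Theta> (X j) z)"
  by (simp add: Th_sum Th_sgn)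

lemma Th_sym: "\<Theta> x y = \<Theta> y x"
proof -
  have "\<Theta> x y = \<Theta> 1 (x * y)" using Th_bim[of 1 1 x y] by simp
  moreover have "\<Theta> y x = \<Theta> 1 (x * y)" using Th_bim[of y 1 1 x] by simp
  ultimately show ?thesis by simp
qed
lemma Th_mulL: "\<Theta> (a * x) y = \<Theta> x (y * a)" using Th_bim[of a x 1 y] by simp
lemma Th_mulR: "\<Theta> (x * b) y = \<Theta> x (b * y)" using Th_bim[of 1 x b y] by simp

lemma Th_ext: "(\<And>a. \<Theta> x a = \<Theta> y a) \<Longrightarrow> x = y"
  using Th_inj by (metis ext injD)

lemma Th_inv: "linform sm \<phi> \<Longrightarrow> \<Theta> (the_inv_into UNIV \<Theta> \<phi>) = \<phi>"
  by (metis Th_bij bij_betw_def f_the_inv_into_f mem_Collect_eq)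
lemma inv_Th: "the_inv_into UNIV \<Theta> (\<Theta> x) = x"
  using Th_inj by (simp add: the_inv_into_f_f)

lemma cochain_zero: "cochain sm n f \<Longrightarrow> length xs \<noteq> Suc n \<Longrightarrow> f xs = 0"
  unfolding cochain_def by blast

lemma cochain_lin:
  assumes "cochain sm n f" "length xs = Suc n" "i \<le> n"
  shows "f (xs[i := x + y]) = f (xs[i := x]) + f (xs[i := y])" "f (xs[i := sm c x]) = c * f (xs[i := x])"
  using assms unfolding cochain_def by blast+

lemma cochain_slot0: "cochain sm n f \<Longrightarrow> linform sm (\<lambda>a. f (a # ys))"
proof -
  assume f: "cochain sm n f"
  show ?thesis
  proof (cases "length ys = n")
    case True
    have "f (a # ys) = f ((x # ys)[0 := a])" for a x by simp
    then show ?thesis unfolding linform_def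
      using cochain_lin[OF f, of "x # ys" 0 for x] True by (metis length_Cons zero_le list_update_code(2))
  next
    case False
    then show ?thesis using cochain_zero[OF f] unfolding linform_def by simp
  qed
qed

lemma Th_to_hoch: "cochain sm n f \<Longrightarrow> \<Theta> (to_hoch \<Theta> f ys) = (\<lambda>a. f (a # ys))"
  unfolding to_hoch_def by (rule Th_inv[OF cochain_slot0])

lemma f_Th: "cochain sm n f \<Longrightarrow> f (a # L) = \<Theta> (to_hoch \<Theta> f L) a"
  using Th_to_hoch by metis

lemma to_hoch_zero: "cochain sm n f \<Longrightarrow> length ys \<noteq> n \<Longrightarrow> to_hoch \<Theta> f ys = 0"
  by (rule Th_ext) (simp add: Th_to_hoch Th_0 cochain_zero)

lemma upd_mid: "(a # us @ v # ws)[Suc (length us) := x] = a # us @ x # ws"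
  by (simp add: list_update_append)

lemma hc_to_hoch:
  assumes f: "cochain sm n f"
  shows "hc n (to_hoch \<Theta> f)"
  unfolding hc_def
proof (intro conjI allI impI)
  fix ys :: "'a list" assume "length ys \<noteq> n" then show "to_hoch \<Theta> f ys = 0" by (rule to_hoch_zero[OF f])
next
  fix us ws :: "'a list" assume len: "length us + length ws + 1 = n"
  have i: "Suc (length us) \<le> n" using len by simp
  have l: "length (a # us @ v # ws) = Suc n" for a v using len by simp
  show "klin (\<lambda>v. to_hoch \<Theta> f (us @ v # ws))"
    unfolding klin_def
  proof (intro conjI allI)
    fix x y
    show "to_hoch \<Theta> f (us @ (x + y) # ws) = to_hoch \<Theta> f (us @ x # ws) + to_hoch \<Theta> f (us @ y # ws)"
    proof (rule Th_ext)
      fix a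
      show "\<Theta> (to_hoch \<Theta> f (us @ (x + y) # ws)) a = \<Theta> (to_hoch \<Theta> f (us @ x # ws) + to_hoch \<Theta> f (us @ y # ws)) a"
        unfolding Th_add Th_to_hoch[OF f]
        using cochain_lin(1)[OF f l[of a 0] i, of x y] unfolding upd_mid .
    qed
  next
    fix c x
    show "to_hoch \<Theta> f (us @ sm c x # ws) = sm c (to_hoch \<Theta> f (us @ x # ws))"
    proof (rule Th_ext)
      fix a
      show "\<Theta> (to_hoch \<Theta> f (us @ sm c x # ws)) a = \<Theta> (sm c (to_hoch \<Theta> f (us @ x # ws))) a"
        unfolding Th_sm Th_to_hoch[OF f]
        using cochain_lin(2)[OF f l[of a 0] i, of c x] unfolding upd_mid .
    qed
  qed
qed

definition tr :: "nat \<Rightarrow> ('a list \<Rightarrow> 'a) \<Rightarrow> 'a list \<Rightarrow> 'k" where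
  "tr N X xs = (if length xs = Suc N then \<Theta> (X (tl xs)) (hd xs) else 0)"

lemma tr_Cons: "length L = N \<Longrightarrow> tr N X (a # L) = \<Theta> (X L) a"
  unfolding tr_def by simp

lemma f_tr: "cochain sm n f \<Longrightarrow> f = tr n (to_hoch \<Theta> f)"
proof
  fix xs assume f: "cochain sm n f"
  show "f xs = tr n (to_hoch \<Theta> f) xs"
  proof (cases xs)
    case Nil then show ?thesis using cochain_zero[OF f] by (simp add: tr_def)
  next
    case (Cons a L)
    then show ?thesis using cochain_zero[OF f] f_Th[OF f] to_hoch_zero[OF f] by (simp add: tr_def Th_0)
  qed
qed

lemma to_hoch_tr: "hc N X \<Longrightarrow> to_hoch \<Theta> (tr N X) = X"
proof
  fix ys assume X: "hc N X"
  show "to_hoch \<Theta> (tr N X) ys = X ys"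
  proof (cases "length ys = N")
    case True
    then have "(\<lambda>a. tr N X (a # ys)) = \<Theta> (X ys)" by (auto simp: tr_def)
    then show ?thesis unfolding to_hoch_def by (simp add: inv_Th)
  next
    case False
    then have "(\<lambda>a. tr N X (a # ys)) = \<Theta> 0" by (auto simp: tr_def Th_0f)
    then show ?thesis unfolding to_hoch_def using hc_zero[OF X False] by (simp add: inv_Th)
  qed
qed

lemma cochain_tr_aux:
  assumes X: "hc N X" and a: "length xs = Suc N \<and> i \<le> N"
  shows "tr N X (xs[i := x + y]) = tr N X (xs[i := x]) + tr N X (xs[i := y]) \<and>
        tr N X (xs[i := sm c x]) = c * tr N X (xs[i := x])"
proof -
  from a obtain b L where xs: "xs = b # L" and L: "length L = N" by (cases xs) auto
  show ?thesis
  proof (cases i)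
    case 0
    then show ?thesis unfolding xs using L by (simp add: tr_Cons Th_radd Th_rsm)
  next
    case (Suc j)
    then have j: "j < N" using a by simp
    have u: "L[j := v] = take j L @ v # drop (Suc j) L" for v using j L by (simp add: upd_conv_take_nth_drop)
    have k: "klin (\<lambda>v. X (take j L @ v # drop (Suc j) L))" by (rule hc_klin[OF X]) (use j L in simp)
    have ln: "length (take j L @ v # drop (Suc j) L) = N" for v using j L by simp
    show ?thesis unfolding xs Suc using L
      by (simp add: tr_Cons[OF ln] u klin_add[OF k] klin_sm[OF k] Th_add Th_sm)
  qed
qed

lemma cochain_tr: "hc N X \<Longrightarrow> cochain sm N (tr N X)"
  unfolding cochain_def using cochain_tr_aux by (auto simp: tr_def)

lemma cbr_tr:
  assumes f: "cochain sm n f" and g: "cochain sm m g"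
  shows "cbr \<Theta> n m f g = tr (n + m - 1) (gb n m (to_hoch \<Theta> f) (to_hoch \<Theta> g))"
proof (rule ext)
  fix xs :: "'a list"
  show "cbr \<Theta> n m f g xs = tr (n + m - 1) (gb n m (to_hoch \<Theta> f) (to_hoch \<Theta> g)) xs"
  proof (cases "length xs = n + m \<and> xs \<noteq> []")
    case True
    then obtain a L where xs: "xs = a # L" and L: "length L = n + m - 1" by (cases xs) auto
    have r: "tr (n + m - 1) (gb n m (to_hoch \<Theta> f) (to_hoch \<Theta> g)) (a # L) =
       (\<Sum>i<n. (-1) ^ (i * (m + 1)) * \<Theta> (to_hoch \<Theta> f (ins i (to_hoch \<Theta> g) m L)) a)
       - (-1) ^ ((n + 1) * (m + 1)) * (\<Sum>j<m. (-1) ^ (j * (n + 1)) * \<Theta> (to_hoch \<Theta> g (ins j (to_hoch \<Theta> f) n L)) a)"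
      unfolding tr_Cons[OF L] gb_def Th_diff_sgn circ_def Th_sgnsum ..
    show ?thesis unfolding xs r unfolding cbr_def using True unfolding xs
      by (simp add: f_Th[OF f] f_Th[OF g] ins_def)
  next
    case False
    show ?thesis
    proof (cases "length xs = Suc (n + m - 1)")
      case True
      with False have nm: "n = 0" "m = 0" by auto
      show ?thesis using False unfolding cbr_def tr_def nm by (simp add: gb_def circ_def Th_0)
    next
      case f2: False
      then show ?thesis using False unfolding cbr_def tr_def by auto
    qed
  qed
qed

end

lemma sum_atMost_shift0: "(\<Sum>i\<le>n. f i) = f 0 + (\<Sum>i<n. f (Suc i))"
  by (induction n) (simp_all add: add.assoc)

definition M :: "'a::ring_1 list \<Rightarrow> 'a" where
  "M ys = (if length ys = 2 then ys ! 0 * ys ! 1 else 0)"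
lemma take2: "i + 2 \<le> length ys \<Longrightarrow> take 2 (drop i ys) = [ys ! i, ys ! Suc i]"
proof -
  assume a: "i + 2 \<le> length ys"
  then have "drop i ys = ys ! i # ys ! Suc i # drop (Suc (Suc i)) ys" by (simp add: Cons_nth_drop_Suc)
  then show ?thesis by (simp add: numeral_2_eq_2)
qed
lemma ins_M: "i + 2 \<le> length ys \<Longrightarrow> ins i M 2 ys = take i ys @ [ys ! i * ys ! Suc i] @ drop (i + 2) ys"
  unfolding ins_def M_def by (simp add: take2)
lemma antisym_alg: "(s::'a::ring_1) * s = 1 \<Longrightarrow> A - s * B = - (s * (B - s * A))"
  by (simp add: right_diff_distrib mult.assoc[symmetric])

lemma gb_antisym: "gb n m F G ys = - ((-1) ^ ((n + 1) * (m + 1)) * gb m n G F ys)"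
proof -
  have s': "(-1::'a::ring_1) ^ ((m + 1) * (n + 1)) = (-1) ^ ((n + 1) * (m + 1))" by (simp add: mult.commute)
  show ?thesis unfolding gb_def s' by (rule antisym_alg) (rule sgn_sq)
qed

context frob begin

lemma hc_M: "hc 2 M"
  unfolding hc_def
proof (intro conjI allI impI)
  fix ys :: "'a list" assume "length ys \<noteq> 2" then show "M ys = 0" by (simp add: M_def)
next
  fix us ws :: "'a list" assume l: "length us + length ws + 1 = 2"
  then consider "us = [] \<and> length ws = 1" | "length us = 1 \<and> ws = []" by (cases us) auto
  then show "klin (\<lambda>v. M (us @ v # ws))"
  proof cases
    case 1
    then obtain w where "ws = [w]" by (cases ws) auto
    then show ?thesis using 1 unfolding klin_def M_def by (simp add: distrib_right smml)
  next
    case 2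
    then obtain u where "us = [u]" by (cases us) (auto simp: length_Suc_conv)
    then show ?thesis using 2 unfolding klin_def M_def by (simp add: distrib_left smmr)
  qed
qed

lemma hoch_d_tr:
  assumes F: "hc n F"
  shows "hoch_d n (tr n F) = tr (Suc n) (\<lambda>ys. (-1) ^ (n + 1) * gb 2 n M F ys)"
proof (rule ext)
  fix xs :: "'a list"
  show "hoch_d n (tr n F) xs = tr (Suc n) (\<lambda>ys. (-1) ^ (n + 1) * gb 2 n M F ys) xs"
  proof (cases "length xs = n + 2")
    case False
    then show ?thesis unfolding hoch_d_def tr_def by simp
  next
    case True
    then obtain a ys where xs: "xs = a # ys" and ly: "length ys = Suc n" by (cases xs) auto
    define P where "P = \<Theta> (ys ! 0 * F (tl ys)) a"
    define Q where "Q i = \<Theta> (F (ins i M 2 ys)) a" for i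
    define R where "R = \<Theta> (F (take n ys) * ys ! n) a"
    have t0: "tr n F (take 0 xs @ [xs ! 0 * xs ! Suc 0] @ drop (0 + 2) xs) = P"
    proof -
      have "take 0 xs @ [xs ! 0 * xs ! Suc 0] @ drop (0 + 2) xs = (a * ys ! 0) # tl ys"
        unfolding xs using ly by (cases ys) auto
      then show ?thesis unfolding P_def using ly by (simp add: tr_Cons Th_mulL)
    qed
    have ti: "tr n F (take (Suc i) xs @ [xs ! Suc i * xs ! Suc (Suc i)] @ drop (Suc i + 2) xs) = Q i" if i: "i < n" for i
    proof -
      have "take (Suc i) xs @ [xs ! Suc i * xs ! Suc (Suc i)] @ drop (Suc i + 2) xs = a # ins i M 2 ys"
        unfolding xs using ins_M[of i ys] ly i by simp
      moreover have "length (ins i M 2 ys) = n" using ly i by (simp add: length_ins)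
      ultimately show ?thesis unfolding Q_def by (simp add: tr_Cons)
    qed
    have tl: "tr n F ((xs ! (n + 1) * xs ! 0) # take n (drop 1 xs)) = R"
      unfolding xs R_def using ly by (simp add: tr_Cons Th_mulR)
    have ts: "(\<Sum>i<n. (-1) ^ Suc i * tr n F (take (Suc i) xs @ [xs ! Suc i * xs ! Suc (Suc i)] @ drop (Suc i + 2) xs))
        = (\<Sum>i<n. (-1) ^ Suc i * Q i)"
      by (intro sum.cong refl) (simp only: lessThan_iff ti)
    have lhs: "hoch_d n (tr n F) xs = P + (\<Sum>i<n. (-1) ^ Suc i * Q i) + (-1) ^ (n + 1) * R"
      unfolding hoch_d_def using True ts
      by (simp only: simp_thms if_True sum_atMost_shift0 t0 tl power_0 mult_1)
    have c2: "circ 2 n M F ys = F (take n ys) * ys ! n + (-1) ^ (n + 1) * (ys ! 0 * F (tl ys))"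
    proof -
      have "drop n ys = [ys ! n]" using ly by (metis Cons_nth_drop_Suc drop_eq_Nil le_refl lessI)
      then have "ins 0 F n ys = [F (take n ys), ys ! n]" unfolding ins_def by simp
      moreover have "ins 1 F n ys = [ys ! 0, F (tl ys)]" unfolding ins_def using ly
        by (cases ys) auto
      ultimately show ?thesis unfolding circ_def using ly
        by (simp add: M_def numeral_2_eq_2 lessThan_Suc)
    qed
    have rhs: "tr (Suc n) (\<lambda>ys. (-1) ^ (n + 1) * gb 2 n M F ys) xs =
      (-1) ^ (n + 1) * (\<Theta> (F (take n ys) * ys ! n) a + (-1) ^ (n + 1) * P
        - (-1) ^ ((2 + 1) * (n + 1)) * (\<Sum>i<n. (-1) ^ (i * (2 + 1)) * Q i))"
      unfolding xs tr_Cons[OF ly] Th_sgn gb_def Th_diff_sgn c2 unfolding Th_add Th_sgn circ_def Th_sgnsum Q_def P_def ..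
    define S3 where "S3 = (\<Sum>i<n. (-1) ^ (i * (2 + 1)) * Q i)"
    define S1 where "S1 = (\<Sum>i<n. (-1) ^ Suc i * Q i)"
    have e1: "(-1::'k) ^ (n + 1) * (-1) ^ (n + 1) = 1" by (rule sgn_sq)
    have e2: "(-1::'k) ^ (n + 1) * (-1) ^ ((2 + 1) * (n + 1)) = 1"
      unfolding power_add[symmetric] by (rule neg_one_even_power) simp
    have e3: "S3 = - S1"
    proof -
      have "((-1)::'k) ^ (i * (2 + 1)) = ((-1)::'k) ^ i" for i
        by (rule sgn_eq) simp
      then show ?thesis unfolding S3_def S1_def by (simp add: sum_negf[symmetric])
    qed
    have "(-1) ^ (n + 1) * (R + (-1) ^ (n + 1) * P - (-1) ^ ((2 + 1) * (n + 1)) * S3)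
        = (-1) ^ (n + 1) * R + ((-1) ^ (n + 1) * (-1) ^ (n + 1)) * P - ((-1) ^ (n + 1) * (-1) ^ ((2 + 1) * (n + 1))) * S3"
      by (simp add: algebra_simps)
    also have "\<dots> = P + S1 + (-1) ^ (n + 1) * R" unfolding e1 e2 e3 by simp
    finally have X: "(-1) ^ (n + 1) * (R + (-1) ^ (n + 1) * P - (-1) ^ ((2 + 1) * (n + 1)) * S3) = P + S1 + (-1) ^ (n + 1) * R" .
    have L: "hoch_d n (tr n F) xs = P + S1 + (-1) ^ (n + 1) * R" unfolding lhs S1_def ..
    have RR: "tr (Suc n) (\<lambda>ys. (-1) ^ (n + 1) * gb 2 n M F ys) xs = (-1) ^ (n + 1) * (R + (-1) ^ (n + 1) * P - (-1) ^ ((2 + 1) * (n + 1)) * S3)"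
      unfolding rhs R_def S3_def ..
    show ?thesis unfolding L RR X ..
  qed
qed

end

lemma sgn_solve:
  fixes T1 T3 :: "'a::ring_1"
  assumes eq: "(-1) ^ a * T1 + (-1) ^ c * T3 = 0" and ev: "even (a + b + c)"
  shows "- ((-1) ^ b * T3) = T1"
proof -
  have "(-1) ^ c * ((-1) ^ a * T1 + (-1) ^ c * T3) = 0" using eq by simp
  then have "(-1) ^ (c + a) * T1 + T3 = 0"
    by (simp add: distrib_left mult.assoc[symmetric] power_add sgn_sq)
  then have T3: "T3 = - ((-1) ^ (c + a) * T1)" by (simp add: eq_neg_iff_add_eq_0 add.commute)
  have "(-1::'a) ^ (b + (c + a)) = 1" using ev by (simp add: add.commute add.left_commute)
  then show ?thesis unfolding T3 by (simp add: mult.assoc[symmetric] power_add[symmetric])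
qed

lemma sgn_cancel: "(-1::'a::ring_1) ^ e * x = 0 \<Longrightarrow> x = 0"
  by (metis mult.assoc mult_1 mult_zero_right sgn_sq)

context frob begin

lemma hc_sgn: "hc N X \<Longrightarrow> hc N (\<lambda>ys. (-1) ^ e * X ys)"
  unfolding hc_def by (auto intro: klin_sgnf)

lemma circ_sgn2:
  assumes F: "hc n F"
  shows "circ n q F (\<lambda>z. (-1) ^ e * Y z) ys = (-1) ^ e * circ n q F Y ys"
proof -
  have "F (ins i (\<lambda>z. (-1) ^ e * Y z) q ys) = (-1) ^ e * F (ins i Y q ys)" for i
  proof (cases "length (take i ys) + length (drop (i + q) ys) + 1 = n")
    case True
    have k: "klin (\<lambda>v. F (take i ys @ v # drop (i + q) ys))" by (rule hc_klin[OF F True])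
    show ?thesis unfolding ins_def by (rule klin_sgn[OF k])
  next
    case False
    then show ?thesis unfolding ins_def using hc_zero[OF F] by simp
  qed
  then show ?thesis unfolding circ_def by (simp add: sum_distrib_left sgn_lcomm)
qed

lemma gb_sgn1: "hc m G \<Longrightarrow> gb n m (\<lambda>ys. (-1) ^ e * X ys) G ys = (-1) ^ e * gb n m X G ys"
  unfolding gb_def circ_sgn2
  by (simp add: circ_def sum_distrib_left sgn_lcomm right_diff_distrib)

lemma gb_zero2: "hc n F \<Longrightarrow> gb n q F (\<lambda>_. 0) ys = 0"
  unfolding gb_def using circ_zero2[of n F q ys] circ_zero1[of q n F ys] by simp

lemma tr_sgn: "tr N (\<lambda>ys. (-1) ^ e * X ys) xs = (-1) ^ e * tr N X xs"
  unfolding tr_def by (simp add: Th_sgn)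

lemma tr_zero: "tr N (\<lambda>_. 0) = (\<lambda>_. 0)"
  unfolding tr_def by (auto simp: Th_0)

lemma cocycle_gb:
  assumes f: "cyc_cocycle sm n f"
  shows "gb 2 n M (to_hoch \<Theta> f) = (\<lambda>_. 0)"
proof (rule ext)
  fix ys :: "'a list"
  have fc: "cochain sm n f" using f unfolding cyc_cocycle_def cyclic_cochain_def by blast
  have F: "hc n (to_hoch \<Theta> f)" by (rule hc_to_hoch[OF fc])
  have hd0: "hoch_d n f xs = 0" for xs using f unfolding cyc_cocycle_def by blast
  have hcg: "hc (Suc n) (gb 2 n M (to_hoch \<Theta> f))" using hc_gb[OF hc_M F] by simp
  show "gb 2 n M (to_hoch \<Theta> f) ys = 0"
  proof (cases "length ys = Suc n")
    case True
    have "hoch_d n f = hoch_d n (tr n (to_hoch \<Theta> f))" using f_tr[OF fc] by (rule arg_cong)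
    then have hf: "hoch_d n f = tr (Suc n) (\<lambda>ys. (-1) ^ (n + 1) * gb 2 n M (to_hoch \<Theta> f) ys)"
      unfolding hoch_d_tr[OF F] .
    have "tr (Suc n) (\<lambda>ys. (-1) ^ (n + 1) * gb 2 n M (to_hoch \<Theta> f) ys) (a # ys) = 0" for a
      using hd0[of "a # ys"] unfolding hf .
    then have "\<Theta> ((-1) ^ (n + 1) * gb 2 n M (to_hoch \<Theta> f) ys) a = \<Theta> 0 a" for a
      by (simp add: tr_Cons[OF True] Th_0)
    then have "(-1) ^ (n + 1) * gb 2 n M (to_hoch \<Theta> f) ys = 0" by (rule Th_ext)
    then show ?thesis by (rule sgn_cancel)
  next
    case False
    then show ?thesis using hc_zero[OF hcg] by blast
  qed
qed

lemma gbM_closed: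
  assumes F: "hc n F" and G: "hc m G" and F0: "gb 2 n M F = (\<lambda>_. 0)" and G0: "gb 2 m M G = (\<lambda>_. 0)"
  shows "gb 2 (n + m - 1) M (gb n m F G) ys = 0"
proof (cases "n + m = 0")
  case True
  then have "gb n m F G = (\<lambda>_. 0)" by (auto simp: gb_def circ_def)
  then show ?thesis using gb_zero2[OF hc_M] by simp
next
  case nz: False
  show ?thesis
  proof (cases "length ys = n + m")
  case True
  have J: "(-1) ^ ((2 + 1) * (m + 1)) * gb 2 (n + m - 1) M (gb n m F G) ys
    + (-1) ^ ((n + 1) * (2 + 1)) * gb n (m + 2 - 1) F (gb m 2 G M) ys
    + (-1) ^ ((m + 1) * (n + 1)) * gb m (2 + n - 1) G (gb 2 n M F) ys = 0"
    by (rule jacobi_hc[OF hc_M F G]) (use True in auto)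
  have "gb m 2 G M = (\<lambda>_. 0)" using gb_antisym[of m 2 G M] G0 by (auto intro!: ext)
  then have "gb n (m + 2 - 1) F (gb m 2 G M) ys = 0" using gb_zero2[OF F] by simp
  moreover have "gb m (2 + n - 1) G (gb 2 n M F) ys = 0" unfolding F0 using gb_zero2[OF G] by simp
  ultimately have "(-1) ^ ((2 + 1) * (m + 1)) * gb 2 (n + m - 1) M (gb n m F G) ys = 0" using J by simp
  then show ?thesis by (rule sgn_cancel)
next
  case False
  have "hc (2 + (n + m - 1) - 1) (gb 2 (n + m - 1) M (gb n m F G))" by (rule hc_gb[OF hc_M hc_gb[OF F G]])
  moreover have "length ys \<noteq> 2 + (n + m - 1) - 1" using False nz by simp
  ultimately show ?thesis using hc_zero by blast
qed
qed

lemma descent_hc: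
  assumes U: "hc k U" and G: "hc m G" and G0: "gb 2 m M G = (\<lambda>_. 0)" and len: "length ys = k + m"
  shows "gb (k + 1) m (gb 2 k M U) G ys = gb 2 (k + m - 1) M (gb k m U G) ys"
proof -
  have J: "(-1) ^ ((2 + 1) * (m + 1)) * gb 2 (k + m - 1) M (gb k m U G) ys
    + (-1) ^ ((k + 1) * (2 + 1)) * gb k (m + 2 - 1) U (gb m 2 G M) ys
    + (-1) ^ ((m + 1) * (k + 1)) * gb m (2 + k - 1) G (gb 2 k M U) ys = 0"
    by (rule jacobi_hc[OF hc_M U G]) (use len in auto)
  have "gb m 2 G M = (\<lambda>_. 0)" using gb_antisym[of m 2 G M] G0 by (auto intro!: ext)
  then have "gb k (m + 2 - 1) U (gb m 2 G M) ys = 0" using gb_zero2[OF U] by simp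
  then have J': "(-1) ^ ((2 + 1) * (m + 1)) * gb 2 (k + m - 1) M (gb k m U G) ys
    + (-1) ^ ((m + 1) * (k + 1)) * gb m (k + 1) G (gb 2 k M U) ys = 0" using J by simp
  have "- ((-1) ^ ((k + 1 + 1) * (m + 1)) * gb m (k + 1) G (gb 2 k M U) ys) = gb 2 (k + m - 1) M (gb k m U G) ys"
    by (rule sgn_solve[OF J']) (simp add: even_add even_mult_iff)
  then show ?thesis using gb_antisym[of "k + 1" m "gb 2 k M U" G ys] by simp
qed

end

definition Aof :: "('a list \<Rightarrow> 'k) \<Rightarrow> ('a list \<Rightarrow> 'a) \<Rightarrow> nat \<Rightarrow> nat \<Rightarrow> 'a list \<Rightarrow> 'k" where
  "Aof f G m i xs = f (hd xs # ins i G m (tl xs))"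

lemma ins_append: "i + m \<le> length L \<Longrightarrow> ins i G m L @ R = ins i G m (L @ R)"
  unfolding ins_def by simp

lemma ins_Cons_Suc: "ins (Suc i) G m (u # L) = u # ins i G m L"
  unfolding ins_def by simp

context frob begin

lemma cbr_AB: "cbr \<Theta> n m f g xs = (if length xs = n + m \<and> xs \<noteq> [] then
    (\<Sum>i<n. (-1) ^ (i * (m + 1)) * Aof f (to_hoch \<Theta> g) m i xs)
    - (-1) ^ ((n + 1) * (m + 1)) * (\<Sum>j<m. (-1) ^ (j * (n + 1)) * Aof g (to_hoch \<Theta> f) n j xs) else 0)"
  unfolding cbr_def Aof_def ins_def by simp

lemma cyc_rot:
  assumes f: "cyclic_cochain sm n f"
  shows "f (z # L) = (-1) ^ n * f (L @ [z])"
proof (cases "length L = n")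
  case True
  then show ?thesis using f unfolding cyclic_cochain_def
    by (metis butlast_snoc last_snoc length_append_singleton)
next
  case False
  have c: "cochain sm n f" using f unfolding cyclic_cochain_def by blast
  then show ?thesis using False cochain_zero[OF c] by simp
qed

lemma cyc_cochain: "cyclic_cochain sm n f \<Longrightarrow> cochain sm n f"
  unfolding cyclic_cochain_def by blast

lemma swapTh:
  assumes f: "cochain sm n f" and g: "cochain sm m g"
  shows "f (to_hoch \<Theta> g K # L) = g (to_hoch \<Theta> f L # K)"
  unfolding f_Th[OF f] f_Th[OF g] by (rule Th_sym)

lemma rot_a:
  assumes f: "cyclic_cochain sm n f" and len: "length us = n + m - 1" and i: "1 \<le> i" "i < n"
  shows "Aof f G m i (z # us) = (-1) ^ n * Aof f G m (i - 1) (us @ [z])"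
proof -
  obtain u us' where us: "us = u # us'" using len i by (cases us) auto
  obtain i' where i': "i = Suc i'" using i by (cases i) auto
  have "ins i' G m us' @ [z] = ins i' G m (us' @ [z])"
    by (rule ins_append) (use len i us i' in simp)
  then show ?thesis unfolding Aof_def us i' using cyc_rot[OF f]
    by (simp add: ins_Cons_Suc)
qed

lemma rot_b:
  assumes f: "cyclic_cochain sm n f" and g: "cyclic_cochain sm m g"
    and len: "length us = n + m - 1" and nm: "1 \<le> n" "1 \<le> m"
  shows "Aof f (to_hoch \<Theta> g) m 0 (z # us) = (-1) ^ (n + m) * Aof g (to_hoch \<Theta> f) n (m - 1) (us @ [z])"
proof -
  obtain u us' where us: "us = u # us'" using len nm by (cases us) auto
  have l': "length us' = n + m - 2" using len us by simp
  have e1: "take (m - 1) (us' @ [z]) = take (m - 1) us'" using l' nm by simp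
  have e2: "take n (drop (m - 1) (us' @ [z])) = drop (m - 1) us' @ [z]" using l' nm by simp
  have e3: "drop (m - 1 + n) (us' @ [z]) = []" using l' nm by simp
  have e4: "u # take (m - 1) us' = take m us" using us nm by (cases m) auto
  have e5: "drop (m - 1) us' = drop m us" using us nm by (cases m) auto
  have "Aof g (to_hoch \<Theta> f) n (m - 1) (us @ [z]) = g (u # ins (m - 1) (to_hoch \<Theta> f) n (us' @ [z]))"
    unfolding Aof_def us by simp
  also have "ins (m - 1) (to_hoch \<Theta> f) n (us' @ [z]) = take (m - 1) us' @ [to_hoch \<Theta> f (drop (m - 1) us' @ [z])]"
    unfolding ins_def e1 e2 e3 by simp
  also have "u # take (m - 1) us' @ [to_hoch \<Theta> f (drop (m - 1) us' @ [z])] = take m us @ [to_hoch \<Theta> f (drop m us @ [z])]"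
    unfolding e5 append_Cons[symmetric] e4 ..
  finally have "Aof g (to_hoch \<Theta> f) n (m - 1) (us @ [z]) = g (take m us @ [to_hoch \<Theta> f (drop m us @ [z])])" .
  moreover have "Aof f (to_hoch \<Theta> g) m 0 (z # us) = (-1) ^ n * ((-1) ^ m * g (take m us @ [to_hoch \<Theta> f (drop m us @ [z])]))"
  proof -
    have "Aof f (to_hoch \<Theta> g) m 0 (z # us) = f (z # to_hoch \<Theta> g (take m us) # drop m us)"
      unfolding Aof_def ins_def by simp
    also have "\<dots> = (-1) ^ n * f (to_hoch \<Theta> g (take m us) # drop m us @ [z])"
      using cyc_rot[OF f, of z "to_hoch \<Theta> g (take m us) # drop m us"] by simp
    also have "f (to_hoch \<Theta> g (take m us) # drop m us @ [z]) = g (to_hoch \<Theta> f (drop m us @ [z]) # take m us)"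
      by (rule swapTh[OF cyc_cochain[OF f] cyc_cochain[OF g]])
    also have "\<dots> = (-1) ^ m * g (take m us @ [to_hoch \<Theta> f (drop m us @ [z])])" by (rule cyc_rot[OF g])
    finally show ?thesis .
  qed
  ultimately show ?thesis by (simp add: power_add mult.assoc)
qed

lemma rot_b0:
  assumes f: "cyclic_cochain sm n f" and len: "length us = n - 1" and n: "1 \<le> n"
  shows "Aof f G 0 0 (z # us) = Aof f G 0 (n - 1) (us @ [z])"
proof -
  have "Aof f G 0 0 (z # us) = f (z # G [] # us)" unfolding Aof_def ins_def by simp
  also have "\<dots> = (-1) ^ n * f (G [] # us @ [z])" using cyc_rot[OF f, of z "G [] # us"] by simp
  also have "f (G [] # us @ [z]) = (-1) ^ n * f ((us @ [z]) @ [G []])" by (rule cyc_rot[OF f])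
  finally have A: "Aof f G 0 0 (z # us) = f ((us @ [z]) @ [G []])" by (simp add: mult.assoc[symmetric] sgn_sq)
  have "Aof f G 0 (n - 1) (us @ [z]) = f ((us @ [z]) @ [G []])"
  proof (cases us)
    case Nil
    then show ?thesis using len n unfolding Aof_def ins_def by simp
  next
    case (Cons u us')
    then show ?thesis using len n unfolding Aof_def ins_def by simp
  qed
  then show ?thesis using A by simp
qed

lemma rotS:
  assumes f: "cyclic_cochain sm n f" and len: "length us = n + m - 1" and n: "1 \<le> n"
  shows "(\<Sum>i<n. (-1) ^ (i * (m + 1)) * Aof f G m i (z # us)) =
    Aof f G m 0 (z # us) + (-1) ^ (n + m - 1) * (\<Sum>i<n. (-1) ^ (i * (m + 1)) * Aof f G m i (us @ [z]))
    - (-1) ^ (n + m - 1) * ((-1) ^ ((n - 1) * (m + 1)) * Aof f G m (n - 1) (us @ [z]))"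
proof -
  obtain n' where n': "n = Suc n'" using n by (cases n) auto
  have "(\<Sum>i<n. (-1) ^ (i * (m + 1)) * Aof f G m i (z # us)) =
      Aof f G m 0 (z # us) + (\<Sum>k<n'. (-1) ^ (Suc k * (m + 1)) * Aof f G m (Suc k) (z # us))"
    unfolding n' using sum_lessThan_add[of "\<lambda>i. (-1) ^ (i * (m + 1)) * Aof f G m i (z # us)" 1 n'] by simp
  also have "(\<Sum>k<n'. (-1) ^ (Suc k * (m + 1)) * Aof f G m (Suc k) (z # us)) =
      (\<Sum>k<n'. (-1) ^ (n + m - 1) * ((-1) ^ (k * (m + 1)) * Aof f G m k (us @ [z])))"
  proof (rule sum.cong[OF refl])
    fix k assume k: "k \<in> {..<n'}"
    have r: "Aof f G m (Suc k) (z # us) = (-1) ^ n * Aof f G m k (us @ [z])"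
      using rot_a[OF f len, of "Suc k" G z] k n' by simp
    have s: "(-1::'k) ^ (Suc k * (m + 1)) * (-1) ^ n = (-1) ^ (n + m - 1) * (-1) ^ (k * (m + 1))"
      unfolding power_add[symmetric] by (rule sgn_eq) (auto simp: n' even_add even_mult_iff)
    show "(-1) ^ (Suc k * (m + 1)) * Aof f G m (Suc k) (z # us) = (-1) ^ (n + m - 1) * ((-1) ^ (k * (m + 1)) * Aof f G m k (us @ [z]))"
      unfolding r using s by (simp add: mult.assoc[symmetric])
  qed
  also have "(\<Sum>i<n. (-1) ^ (i * (m + 1)) * Aof f G m i (us @ [z])) =
      (\<Sum>k<n'. (-1) ^ (k * (m + 1)) * Aof f G m k (us @ [z])) + (-1) ^ ((n - 1) * (m + 1)) * Aof f G m (n - 1) (us @ [z])"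
    unfolding n' by simp
  ultimately show ?thesis by (simp add: sum_distrib_left algebra_simps)
qed

lemma cbr_rot:
  assumes f: "cyclic_cochain sm n f" and g: "cyclic_cochain sm m g" and len: "length us = n + m - 1"
  shows "cbr \<Theta> n m f g (z # us) = (-1) ^ (n + m - 1) * cbr \<Theta> n m f g (us @ [z])"
proof (cases "n + m = 0")
  case True
  then show ?thesis by (simp add: cbr_AB)
next
  case False
  define F where "F = to_hoch \<Theta> f"
  define G where "G = to_hoch \<Theta> g"
  define E where "E = ((-1)::'k) ^ (n + m - 1)"
  define \<sigma> where "\<sigma> = ((-1)::'k) ^ ((n + 1) * (m + 1))"
  define SA where "SA xs = (\<Sum>i<n. (-1) ^ (i * (m + 1)) * Aof f G m i xs)" for xs
  define SB where "SB xs = (\<Sum>j<m. (-1) ^ (j * (n + 1)) * Aof g F n j xs)" for xs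
  have len': "length us = m + n - 1" using len by (simp add: add.commute)
  have l1: "length (z # us) = n + m" "length (us @ [z]) = n + m" using len False by auto
  have cz: "cbr \<Theta> n m f g (z # us) = SA (z # us) - \<sigma> * SB (z # us)"
    unfolding cbr_AB SA_def SB_def \<sigma>_def F_def G_def using l1 by simp
  have cu: "cbr \<Theta> n m f g (us @ [z]) = SA (us @ [z]) - \<sigma> * SB (us @ [z])"
    unfolding cbr_AB SA_def SB_def \<sigma>_def F_def G_def using l1 by simp
  consider "1 \<le> n \<and> 1 \<le> m" | "m = 0 \<and> 1 \<le> n" | "n = 0 \<and> 1 \<le> m" using False by linarith
  then show ?thesis
  proof cases
    case 1
    then obtain n' m' where nm: "n = Suc n'" "m = Suc m'" by (cases n; cases m) auto
    have A: "SA (z # us) = (-1) ^ (n + m) * Aof g F n (m - 1) (us @ [z]) + E * SA (us @ [z])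
        - E * ((-1) ^ ((n - 1) * (m + 1)) * Aof f G m (n - 1) (us @ [z]))"
      unfolding SA_def E_def rotS[OF f len conjunct1[OF 1]] unfolding G_def F_def rot_b[OF f g len conjunct1[OF 1] conjunct2[OF 1]] ..
    have B: "SB (z # us) = (-1) ^ (m + n) * Aof f G m (n - 1) (us @ [z]) + E * SB (us @ [z])
        - E * ((-1) ^ ((m - 1) * (n + 1)) * Aof g F n (m - 1) (us @ [z]))"
    proof -
      have "m + n - 1 = n + m - 1" by simp
      then show ?thesis unfolding SB_def E_def rotS[OF g len' conjunct2[OF 1]] unfolding G_def F_def
        rot_b[OF g f len' conjunct2[OF 1] conjunct1[OF 1]] by simp
    qed
    have c1: "\<sigma> * E * (-1) ^ ((m - 1) * (n + 1)) = - ((-1) ^ (n + m))"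
    proof -
      have "\<sigma> * E * (-1) ^ ((m - 1) * (n + 1)) = (-1) ^ (Suc (n + m))"
        unfolding \<sigma>_def E_def power_add[symmetric] by (rule sgn_eq) (auto simp: nm even_add even_mult_iff)
      then show ?thesis by simp
    qed
    have c2: "E * (-1) ^ ((n - 1) * (m + 1)) = - (\<sigma> * (-1) ^ (m + n))"
    proof -
      have "E * (-1) ^ ((n - 1) * (m + 1)) = (-1) ^ (Suc ((n + 1) * (m + 1) + (m + n)))"
        unfolding \<sigma>_def E_def power_add[symmetric] by (rule sgn_eq) (auto simp: nm even_add even_mult_iff)
      then show ?thesis unfolding \<sigma>_def by (simp add: power_add)
    qed
    define a where "a = Aof f G m (n - 1) (us @ [z])"
    define b where "b = Aof g F n (m - 1) (us @ [z])"
    have "SA (z # us) - \<sigma> * SB (z # us) = E * (SA (us @ [z]) - \<sigma> * SB (us @ [z]))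
        + b * ((-1) ^ (n + m) + \<sigma> * E * (-1) ^ ((m - 1) * (n + 1)))
        - a * (E * (-1) ^ ((n - 1) * (m + 1)) + \<sigma> * (-1) ^ (m + n))"
      unfolding A B a_def[symmetric] b_def[symmetric] by (simp add: algebra_simps)
    also have "\<dots> = E * (SA (us @ [z]) - \<sigma> * SB (us @ [z]))" unfolding c1 c2 by simp
    finally show ?thesis unfolding cz cu E_def .
  next
    case 2
    then have m0: "m = 0" and n1: "1 \<le> n" by auto
    have len0: "length us = n - 1" using len m0 by simp
    have "SA (z # us) = E * SA (us @ [z])"
    proof -
      have r: "Aof f G m 0 (z # us) = Aof f G m (n - 1) (us @ [z])" unfolding m0 by (rule rot_b0[OF f len0 n1])
      have e: "E * (-1) ^ ((n - 1) * (m + 1)) = 1" unfolding E_def m0 by (simp add: sgn_sq)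
      show ?thesis unfolding SA_def rotS[OF f len n1] r E_def[symmetric] using e
        by (simp add: algebra_simps mult.assoc[symmetric])
    qed
    moreover have "SB xs = 0" for xs unfolding SB_def m0 by simp
    ultimately show ?thesis unfolding cz cu E_def by simp
  next
    case 3
    then have n0: "n = 0" and m1: "1 \<le> m" by auto
    have len0: "length us = m - 1" using len n0 by simp
    have "SB (z # us) = E * SB (us @ [z])"
    proof -
      have r: "Aof g F n 0 (z # us) = Aof g F n (m - 1) (us @ [z])" unfolding n0 by (rule rot_b0[OF g len0 m1])
      have e: "E * (-1) ^ ((m - 1) * (n + 1)) = 1" unfolding E_def n0 by (simp add: sgn_sq)
      have em: "m + n - 1 = n + m - 1" by simp
      show ?thesis unfolding SB_def rotS[OF g len' m1] r em E_def[symmetric] using e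
        by (simp add: algebra_simps mult.assoc[symmetric])
    qed
    moreover have "SA xs = 0" for xs unfolding SA_def n0 by simp
    ultimately show ?thesis unfolding cz cu E_def by (simp add: algebra_simps)
  qed
qed

lemma cbr_cyclic:
  assumes f: "cyclic_cochain sm n f" and g: "cyclic_cochain sm m g"
  shows "cyclic_cochain sm (n + m - 1) (cbr \<Theta> n m f g)"
  unfolding cyclic_cochain_def
proof (intro conjI allI impI)
  show "cochain sm (n + m - 1) (cbr \<Theta> n m f g)"
    unfolding cbr_tr[OF cyc_cochain[OF f] cyc_cochain[OF g]]
    by (rule cochain_tr[OF hc_gb[OF hc_to_hoch[OF cyc_cochain[OF f]] hc_to_hoch[OF cyc_cochain[OF g]]]])
next
  fix xs :: "'a list" assume l: "length xs = Suc (n + m - 1)"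
  then have ne: "xs \<noteq> []" by auto
  have l2: "length (butlast xs) = n + m - 1" using l by simp
  show "cbr \<Theta> n m f g (last xs # butlast xs) = (-1) ^ (n + m - 1) * cbr \<Theta> n m f g xs"
    using cbr_rot[OF f g l2, of "last xs"] append_butlast_last_id[OF ne] by simp
qed

end

context frob begin

lemma cochain_slot_add:
  assumes g: "cochain sm m g"
  shows "g (a # us @ (x + y) # ws) = g (a # us @ x # ws) + g (a # us @ y # ws)"
proof (cases "length (a # us @ x # ws) = Suc m")
  case True
  have i: "Suc (length us) \<le> m" using True by simp
  show ?thesis using cochain_lin(1)[OF g True i, of x y] unfolding upd_mid
    by (simp add: list_update_append)
next
  case False
  then show ?thesis using cochain_zero[OF g] by simp
qed

lemma cochain_slot_sm:
  assumes g: "cochain sm m g"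
  shows "g (a # us @ sm c x # ws) = c * g (a # us @ x # ws)"
proof (cases "length (a # us @ x # ws) = Suc m")
  case True
  have i: "Suc (length us) \<le> m" using True by simp
  show ?thesis using cochain_lin(2)[OF g True i, of c x] unfolding upd_mid
    by (simp add: list_update_append)
next
  case False
  then show ?thesis using cochain_zero[OF g] by simp
qed

lemma to_hoch_add:
  assumes f: "cochain sm n f" and f': "cochain sm n f'"
  shows "to_hoch \<Theta> (\<lambda>xs. f xs + f' xs) = (\<lambda>ys. to_hoch \<Theta> f ys + to_hoch \<Theta> f' ys)"
proof (rule ext)
  fix ys
  have "(\<lambda>a. f (a # ys) + f' (a # ys)) = \<Theta> (to_hoch \<Theta> f ys + to_hoch \<Theta> f' ys)"
    by (rule ext) (simp add: Th_add f_Th[OF f] f_Th[OF f'])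
  then show "to_hoch \<Theta> (\<lambda>xs. f xs + f' xs) ys = to_hoch \<Theta> f ys + to_hoch \<Theta> f' ys"
    unfolding to_hoch_def by (simp add: inv_Th)
qed

lemma to_hoch_scale:
  assumes f: "cochain sm n f"
  shows "to_hoch \<Theta> (\<lambda>xs. c * f xs) = (\<lambda>ys. sm c (to_hoch \<Theta> f ys))"
proof (rule ext)
  fix ys
  have "(\<lambda>a. c * f (a # ys)) = \<Theta> (sm c (to_hoch \<Theta> f ys))"
    by (rule ext) (simp add: Th_sm f_Th[OF f])
  then show "to_hoch \<Theta> (\<lambda>xs. c * f xs) ys = sm c (to_hoch \<Theta> f ys)"
    unfolding to_hoch_def by (simp add: inv_Th)
qed

lemma Aof_add2: "cochain sm m g \<Longrightarrow>
  Aof g (\<lambda>ys. F ys + F' ys) n j xs = Aof g F n j xs + Aof g F' n j xs"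
  unfolding Aof_def ins_def by (rule cochain_slot_add)

lemma Aof_sm2: "cochain sm m g \<Longrightarrow>
  Aof g (\<lambda>ys. sm c (F ys)) n j xs = c * Aof g F n j xs"
  unfolding Aof_def ins_def by (rule cochain_slot_sm)

lemma Aof_add1: "Aof (\<lambda>xs. f xs + f' xs) G m i xs = Aof f G m i xs + Aof f' G m i xs"
  unfolding Aof_def by simp
lemma Aof_sm1: "Aof (\<lambda>xs. c * f xs) G m i xs = c * Aof f G m i xs"
  unfolding Aof_def by simp

lemma bilin:
  assumes f: "cochain sm n f" and f': "cochain sm n f'" and g: "cochain sm m g"
  shows "cbr \<Theta> n m (\<lambda>xs. f xs + f' xs) g = (\<lambda>xs. cbr \<Theta> n m f g xs + cbr \<Theta> n m f' g xs)"
    and "cbr \<Theta> n m (\<lambda>xs. c * f xs) g = (\<lambda>xs. c * cbr \<Theta> n m f g xs)"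
    and "cbr \<Theta> m n g (\<lambda>xs. f xs + f' xs) = (\<lambda>xs. cbr \<Theta> m n g f xs + cbr \<Theta> m n g f' xs)"
    and "cbr \<Theta> m n g (\<lambda>xs. c * f xs) = (\<lambda>xs. c * cbr \<Theta> m n g f xs)"
proof -
  show "cbr \<Theta> n m (\<lambda>xs. f xs + f' xs) g = (\<lambda>xs. cbr \<Theta> n m f g xs + cbr \<Theta> n m f' g xs)"
    by (rule ext) (simp add: cbr_AB to_hoch_add[OF f f'] Aof_add1 Aof_add2[OF g] sum.distrib distrib_left right_diff_distrib)
  show "cbr \<Theta> n m (\<lambda>xs. c * f xs) g = (\<lambda>xs. c * cbr \<Theta> n m f g xs)"
    by (rule ext) (simp add: cbr_AB to_hoch_scale[OF f] Aof_sm1 Aof_sm2[OF g] sum_distrib_left right_diff_distrib mult.left_commute)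
  show "cbr \<Theta> m n g (\<lambda>xs. f xs + f' xs) = (\<lambda>xs. cbr \<Theta> m n g f xs + cbr \<Theta> m n g f' xs)"
    by (rule ext) (simp add: cbr_AB to_hoch_add[OF f f'] Aof_add1 Aof_add2[OF g] sum.distrib distrib_left right_diff_distrib)
  show "cbr \<Theta> m n g (\<lambda>xs. c * f xs) = (\<lambda>xs. c * cbr \<Theta> m n g f xs)"
    by (rule ext) (simp add: cbr_AB to_hoch_scale[OF f] Aof_sm1 Aof_sm2[OF g] sum_distrib_left right_diff_distrib mult.left_commute)
qed

lemma cbr_antisym: "cbr \<Theta> m n g f xs = - ((-1) ^ ((n + 1) * (m + 1)) * cbr \<Theta> n m f g xs)"
proof -
  have s': "(-1::'k) ^ ((m + 1) * (n + 1)) = (-1) ^ ((n + 1) * (m + 1))" by (simp add: mult.commute)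
  have l: "(length xs = m + n) = (length xs = n + m)" by (simp add: add.commute)
  show ?thesis
  proof (cases "length xs = n + m \<and> xs \<noteq> []")
    case True
    show ?thesis unfolding cbr_def s' l if_P[OF True] by (rule antisym_alg[OF sgn_sq])
  next
    case False
    show ?thesis unfolding cbr_def s' l if_not_P[OF False] by simp
  qed
qed

end

context frob begin

lemma tr_cong: "(\<And>ys. length ys = N \<Longrightarrow> X ys = Y ys) \<Longrightarrow> tr N X = tr N Y"
  unfolding tr_def by (intro ext) auto

lemma hoch_d_scale: "hoch_d n (\<lambda>xs. c * h xs) = (\<lambda>xs. c * hoch_d n h xs)"
  unfolding hoch_d_def by (intro ext) (simp add: sum_distrib_left mult.left_commute right_diff_distrib)

lemma cyc_scale:
  assumes h: "cyclic_cochain sm N h"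
  shows "cyclic_cochain sm N (\<lambda>xs. c * h xs)"
proof -
  have hc': "cochain sm N h" using h by (rule cyc_cochain)
  have "cochain sm N (\<lambda>xs. c * h xs)"
    using hc' unfolding cochain_def by (simp add: distrib_left mult.left_commute)
  moreover have "\<forall>xs. length xs = Suc N \<longrightarrow> c * h (last xs # butlast xs) = (-1) ^ N * (c * h xs)"
    using h unfolding cyclic_cochain_def by (simp add: mult.left_commute)
  ultimately show ?thesis unfolding cyclic_cochain_def by simp
qed

lemma cochain_zerof: "cochain sm N (\<lambda>_. 0)"
  unfolding cochain_def by simp

lemma to_hoch_zerof: "to_hoch \<Theta> (\<lambda>_. 0) = (\<lambda>_. 0)"
  unfolding to_hoch_def by (simp add: Th_0f[symmetric] inv_Th)

lemma cbr00: "cbr \<Theta> 0 0 f g = (\<lambda>_. 0)"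
  unfolding cbr_def by auto

lemma cbr_zero2:
  assumes f: "cochain sm n f"
  shows "cbr \<Theta> n q f (\<lambda>_. 0) = (\<lambda>_. 0)"
proof -
  have "gb n q (to_hoch \<Theta> f) (\<lambda>_. 0) = (\<lambda>_. 0)" by (rule ext) (rule gb_zero2[OF hc_to_hoch[OF f]])
  then show ?thesis unfolding cbr_tr[OF f cochain_zerof] to_hoch_zerof by (simp only: tr_zero)
qed

lemma cbr_zero1:
  assumes g: "cochain sm m g"
  shows "cbr \<Theta> n m (\<lambda>_. 0) g = (\<lambda>_. 0)"
proof -
  have "gb n m (\<lambda>_. 0) (to_hoch \<Theta> g) = (\<lambda>_. 0)"
    by (rule ext) (simp add: gb_def circ_zero2[OF hc_to_hoch[OF g]] circ_zero1)
  then show ?thesis unfolding cbr_tr[OF cochain_zerof g] to_hoch_zerof by (simp only: tr_zero)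
qed

lemma cbr_cocycle:
  assumes f: "cyc_cocycle sm n f" and g: "cyc_cocycle sm m g"
  shows "cyc_cocycle sm (n + m - 1) (cbr \<Theta> n m f g)"
proof -
  have fcy: "cyclic_cochain sm n f" and gcy: "cyclic_cochain sm m g"
    using f g unfolding cyc_cocycle_def by auto
  note fc = cyc_cochain[OF fcy] and gc = cyc_cochain[OF gcy]
  note F = hc_to_hoch[OF fc] and G = hc_to_hoch[OF gc]
  have X: "hc (n + m - 1) (gb n m (to_hoch \<Theta> f) (to_hoch \<Theta> g))" by (rule hc_gb[OF F G])
  have "hoch_d (n + m - 1) (cbr \<Theta> n m f g) xs = 0" for xs
  proof -
    have "hoch_d (n + m - 1) (cbr \<Theta> n m f g) = tr (Suc (n + m - 1))
        (\<lambda>ys. (-1) ^ (n + m - 1 + 1) * gb 2 (n + m - 1) M (gb n m (to_hoch \<Theta> f) (to_hoch \<Theta> g)) ys)"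
      unfolding cbr_tr[OF fc gc] hoch_d_tr[OF X] ..
    also have "\<dots> = tr (Suc (n + m - 1)) (\<lambda>_. 0)"
      using gbM_closed[OF F G cocycle_gb[OF f] cocycle_gb[OF g]] by simp
    finally show ?thesis by (simp add: tr_zero)
  qed
  then show ?thesis unfolding cyc_cocycle_def using cbr_cyclic[OF fcy gcy] by simp
qed

lemma cbr_descent1:
  assumes f: "cyc_cocycle sm n f" and fb: "cyc_coboundary sm n f" and g: "cyc_cocycle sm m g"
  shows "(\<forall>xs. cbr \<Theta> n m f g xs = 0) \<or>
    (\<exists>k' w. n + m - 1 = Suc k' \<and> cyclic_cochain sm k' w \<and> cbr \<Theta> n m f g = hoch_d k' w)"
proof -
  have fcy: "cyclic_cochain sm n f" and gcy: "cyclic_cochain sm m g"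
    using f g unfolding cyc_cocycle_def by auto
  note fc = cyc_cochain[OF fcy] and gc = cyc_cochain[OF gcy]
  note G = hc_to_hoch[OF gc]
  have G0: "gb 2 m M (to_hoch \<Theta> g) = (\<lambda>_. 0)" by (rule cocycle_gb[OF g])
  from fb consider "\<forall>xs. f xs = 0" | k u where "n = Suc k" "cyclic_cochain sm k u" "f = hoch_d k u"
    unfolding cyc_coboundary_def by blast
  then show ?thesis
  proof cases
    case 1
    then have "f = (\<lambda>_. 0)" by auto
    then have "cbr \<Theta> n m f g = (\<lambda>_. 0)" using cbr_zero1[OF gc] by simp
    then show ?thesis by simp
  next
    case 2
    note n = 2(1) and ucy = 2(2) and fd = 2(3)
    note uc = cyc_cochain[OF ucy]
    note U = hc_to_hoch[OF uc]
    define U' where "U' = to_hoch \<Theta> u"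
    define G' where "G' = to_hoch \<Theta> g"
    define Fx where "Fx ys = (-1) ^ (k + 1) * gb 2 k M U' ys" for ys
    have hFx: "hc (Suc k) Fx"
    proof -
      have "hc (2 + k - 1) (gb 2 k M U')" unfolding U'_def by (rule hc_gb[OF hc_M U])
      then have "hc (Suc k) (gb 2 k M U')" by simp
      then show ?thesis unfolding Fx_def by (rule hc_sgn)
    qed
    have "f = hoch_d k (tr k U')" unfolding fd U'_def using f_tr[OF uc] by (rule arg_cong)
    then have ftr: "f = tr (Suc k) Fx" unfolding hoch_d_tr[OF U[folded U'_def]] Fx_def .
    have Fto: "to_hoch \<Theta> f = Fx" unfolding ftr by (rule to_hoch_tr[OF hFx])
    define W where "W = gb k m U' G'"
    have cbr1: "cbr \<Theta> n m f g = tr (k + m) (\<lambda>ys. (-1) ^ (k + 1) * gb 2 (k + m - 1) M W ys)"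
    proof -
      have "cbr \<Theta> n m f g = tr (k + m) (gb (Suc k) m Fx G')"
        unfolding cbr_tr[OF fc gc] Fto G'_def unfolding n by simp
      also have "\<dots> = tr (k + m) (\<lambda>ys. (-1) ^ (k + 1) * gb 2 (k + m - 1) M W ys)"
      proof (rule tr_cong)
        fix ys :: "'a list" assume l: "length ys = k + m"
        have "gb (Suc k) m Fx G' ys = (-1) ^ (k + 1) * gb (Suc k) m (gb 2 k M U') G' ys"
          unfolding Fx_def G'_def by (rule gb_sgn1[OF G])
        also have "gb (Suc k) m (gb 2 k M U') G' ys = gb 2 (k + m - 1) M W ys"
          unfolding W_def U'_def G'_def using descent_hc[OF U G G0 l] by simp
        finally show "gb (Suc k) m Fx G' ys = (-1) ^ (k + 1) * gb 2 (k + m - 1) M W ys" .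
      qed
      finally show ?thesis .
    qed
    show ?thesis
    proof (cases "k + m = 0")
      case True
      then have "W = (\<lambda>_. 0)" unfolding W_def by (auto simp: gb_def circ_def)
      then have "cbr \<Theta> n m f g = (\<lambda>_. 0)" unfolding cbr1 using True gb_zero2[OF hc_M] tr_zero by simp
      then show ?thesis by simp
    next
      case False
      define w where "w xs = (-1) ^ (m + 1) * cbr \<Theta> k m u g xs" for xs
      have wcy: "cyclic_cochain sm (k + m - 1) w" unfolding w_def by (rule cyc_scale[OF cbr_cyclic[OF ucy gcy]])
      have hW: "hc (k + m - 1) W" unfolding W_def U'_def G'_def by (rule hc_gb[OF U G])
      have "hoch_d (k + m - 1) w = (\<lambda>xs. (-1) ^ (m + 1) * hoch_d (k + m - 1) (cbr \<Theta> k m u g) xs)"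
        unfolding w_def hoch_d_scale ..
      also have "hoch_d (k + m - 1) (cbr \<Theta> k m u g) = tr (Suc (k + m - 1)) (\<lambda>ys. (-1) ^ (k + m - 1 + 1) * gb 2 (k + m - 1) M W ys)"
        unfolding cbr_tr[OF uc gc] W_def[symmetric] U'_def[symmetric] G'_def[symmetric] hoch_d_tr[OF hW] ..
      finally have hd0: "hoch_d (k + m - 1) w = (\<lambda>xs. (-1) ^ (m + 1) * tr (Suc (k + m - 1)) (\<lambda>ys. (-1) ^ (k + m - 1 + 1) * gb 2 (k + m - 1) M W ys) xs)" .
      have e1: "Suc (k + m - 1) = k + m" and e2: "k + m - 1 + 1 = k + m" using False by auto
      have hd: "hoch_d (k + m - 1) w = (\<lambda>xs. (-1) ^ (m + 1) * tr (k + m) (\<lambda>ys. (-1) ^ (k + m) * gb 2 (k + m - 1) M W ys) xs)"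
        using hd0 unfolding e1 e2 .
      have "(\<lambda>xs. (-1) ^ (m + 1) * tr (k + m) (\<lambda>ys. (-1) ^ (k + m) * gb 2 (k + m - 1) M W ys) xs)
          = tr (k + m) (\<lambda>ys. (-1) ^ (k + 1) * gb 2 (k + m - 1) M W ys)"
      proof (rule ext)
        fix xs
        have s: "(-1::'a) ^ (m + 1) * ((-1) ^ (k + m) * z) = (-1) ^ (k + 1) * z" for z
          unfolding mult.assoc[symmetric] power_add[symmetric]
          by (rule arg_cong[where f="\<lambda>t. t * z"], rule sgn_eq) auto
        show "(-1) ^ (m + 1) * tr (k + m) (\<lambda>ys. (-1) ^ (k + m) * gb 2 (k + m - 1) M W ys) xs =
            tr (k + m) (\<lambda>ys. (-1) ^ (k + 1) * gb 2 (k + m - 1) M W ys) xs"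
          unfolding tr_sgn[symmetric] s ..
      qed
      then have "cbr \<Theta> n m f g = hoch_d (k + m - 1) w" unfolding cbr1 hd ..
      moreover have "n + m - 1 = Suc (k + m - 1)" using False n by simp
      ultimately show ?thesis using wcy by blast
    qed
  qed
qed

end

context frob begin

lemma cbr_descent:
  assumes f: "cyc_cocycle sm n f" and fb: "cyc_coboundary sm n f" and g: "cyc_cocycle sm m g"
  shows "cyc_coboundary sm (n + m - 1) (cbr \<Theta> n m f g) \<and> cyc_coboundary sm (n + m - 1) (cbr \<Theta> m n g f)"
proof -
  define c where "c = - ((-1::'k) ^ ((n + 1) * (m + 1)))"
  have anti: "cbr \<Theta> m n g f = (\<lambda>xs. c * cbr \<Theta> n m f g xs)"
    unfolding c_def by (rule ext) (subst cbr_antisym, simp)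
  from cbr_descent1[OF f fb g] show ?thesis
  proof
    assume z: "\<forall>xs. cbr \<Theta> n m f g xs = 0"
    then show ?thesis unfolding cyc_coboundary_def anti by simp
  next
    assume "\<exists>k' w. n + m - 1 = Suc k' \<and> cyclic_cochain sm k' w \<and> cbr \<Theta> n m f g = hoch_d k' w"
    then obtain k' w where k: "n + m - 1 = Suc k'" and w: "cyclic_cochain sm k' w" and e: "cbr \<Theta> n m f g = hoch_d k' w"
      by blast
    have "cbr \<Theta> m n g f = hoch_d k' (\<lambda>xs. c * w xs)" unfolding anti e hoch_d_scale ..
    then have "cyc_coboundary sm (n + m - 1) (cbr \<Theta> m n g f)"
      unfolding cyc_coboundary_def using k cyc_scale[OF w] by blast
    moreover have "cyc_coboundary sm (n + m - 1) (cbr \<Theta> n m f g)"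
      unfolding cyc_coboundary_def using k w e by blast
    ultimately show ?thesis by blast
  qed
qed


lemma jac_nested:
  assumes f: "cochain sm n f" and g: "cochain sm m g" and h: "cochain sm p h" and np: "2 \<le> n + m + p"
  shows "cbr \<Theta> n (m + p - 1) f (cbr \<Theta> m p g h) =
    tr (n + m + p - 2) (gb n (m + p - 1) (to_hoch \<Theta> f) (gb m p (to_hoch \<Theta> g) (to_hoch \<Theta> h)))"
proof -
  have X: "hc (m + p - 1) (gb m p (to_hoch \<Theta> g) (to_hoch \<Theta> h))"
    by (rule hc_gb[OF hc_to_hoch[OF g] hc_to_hoch[OF h]])
  have ch: "cochain sm (m + p - 1) (cbr \<Theta> m p g h)"
    unfolding cbr_tr[OF g h] by (rule cochain_tr[OF X])
  have th: "to_hoch \<Theta> (cbr \<Theta> m p g h) = gb m p (to_hoch \<Theta> g) (to_hoch \<Theta> h)"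
    unfolding cbr_tr[OF g h] by (rule to_hoch_tr[OF X])
  have e: "cbr \<Theta> n (m + p - 1) f (cbr \<Theta> m p g h) =
    tr (n + (m + p - 1) - 1) (gb n (m + p - 1) (to_hoch \<Theta> f) (gb m p (to_hoch \<Theta> g) (to_hoch \<Theta> h)))"
    unfolding cbr_tr[OF f ch] th ..
  show ?thesis
  proof (cases "m + p = 0")
    case True
    then have "gb m p (to_hoch \<Theta> g) (to_hoch \<Theta> h) = (\<lambda>_. 0)" by (auto simp: gb_def circ_def)
    moreover have "gb n (m + p - 1) (to_hoch \<Theta> f) (\<lambda>_. 0) = (\<lambda>_. 0)"
      by (rule ext) (rule gb_zero2[OF hc_to_hoch[OF f]])
    ultimately show ?thesis unfolding e by (simp only: tr_zero)
  next
    case False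
    then have "n + (m + p - 1) - 1 = n + m + p - 2" by arith
    then show ?thesis unfolding e by simp
  qed
qed

lemma jac_small:
  assumes f: "cochain sm n f" and s: "n + m + p \<le> 1"
  shows "cbr \<Theta> n (m + p - 1) f (cbr \<Theta> m p g h) = (\<lambda>_. 0)"
proof (cases "m + p = 0")
  case True
  then have "cbr \<Theta> m p g h = (\<lambda>_. 0)" using cbr00 by simp
  then show ?thesis using cbr_zero2[OF f] by simp
next
  case False
  then have "n = 0" "m + p - 1 = 0" using s by auto
  then show ?thesis using cbr00 by simp
qed

lemma jacobi_final:
  assumes f: "cochain sm n f" and g: "cochain sm m g" and h: "cochain sm p h"
  shows "(-1) ^ ((n + 1) * (p + 1)) * cbr \<Theta> n (m + p - 1) f (cbr \<Theta> m p g h) xs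
    + (-1) ^ ((m + 1) * (n + 1)) * cbr \<Theta> m (p + n - 1) g (cbr \<Theta> p n h f) xs
    + (-1) ^ ((p + 1) * (m + 1)) * cbr \<Theta> p (n + m - 1) h (cbr \<Theta> n m f g) xs = 0"
proof (cases "2 \<le> n + m + p")
  case False
  then have s: "n + m + p \<le> 1" by simp
  show ?thesis using jac_small[OF f s, of g h] jac_small[OF g, of p n h f] jac_small[OF h, of n m f g] s
    by (simp add: add_ac)
next
  case True
  define F where "F = to_hoch \<Theta> f"
  define G where "G = to_hoch \<Theta> g"
  define H where "H = to_hoch \<Theta> h"
  define N where "N = n + m + p - 2"
  have t1: "cbr \<Theta> n (m + p - 1) f (cbr \<Theta> m p g h) = tr N (gb n (m + p - 1) F (gb m p G H))"
    unfolding F_def G_def H_def N_def by (rule jac_nested[OF f g h True])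
  have t2: "cbr \<Theta> m (p + n - 1) g (cbr \<Theta> p n h f) = tr N (gb m (p + n - 1) G (gb p n H F))"
  proof -
    have "m + p + n - 2 = N" unfolding N_def by simp
    then show ?thesis unfolding F_def G_def H_def using jac_nested[OF g h f] True by simp
  qed
  have t3: "cbr \<Theta> p (n + m - 1) h (cbr \<Theta> n m f g) = tr N (gb p (n + m - 1) H (gb n m F G))"
  proof -
    have "p + n + m - 2 = N" unfolding N_def by simp
    then show ?thesis unfolding F_def G_def H_def using jac_nested[OF h f g] True by simp
  qed
  show ?thesis
  proof (cases "length xs = Suc N")
    case False
    then show ?thesis unfolding t1 t2 t3 tr_def by simp
  next
    case l: True
    then obtain a ys where xs: "xs = a # ys" and ly: "length ys = N" by (cases xs) auto
    have J: "(-1) ^ ((n + 1) * (p + 1)) * gb n (m + p - 1) F (gb m p G H) ys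
      + (-1) ^ ((m + 1) * (n + 1)) * gb m (p + n - 1) G (gb p n H F) ys
      + (-1) ^ ((p + 1) * (m + 1)) * gb p (n + m - 1) H (gb n m F G) ys = 0"
      unfolding F_def G_def H_def
      by (rule jacobi_hc[OF hc_to_hoch[OF f] hc_to_hoch[OF g] hc_to_hoch[OF h]]) (use ly True N_def in auto)
    have "\<Theta> ((-1) ^ ((n + 1) * (p + 1)) * gb n (m + p - 1) F (gb m p G H) ys
      + (-1) ^ ((m + 1) * (n + 1)) * gb m (p + n - 1) G (gb p n H F) ys
      + (-1) ^ ((p + 1) * (m + 1)) * gb p (n + m - 1) H (gb n m F G) ys) a = 0"
      unfolding J by (rule Th_0)
    then show ?thesis unfolding t1 t2 t3 xs tr_Cons[OF ly] Th_add Th_sgn .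
  qed
qed

lemma main:
  shows
    "(\<forall>n m f f' g c. cyclic_cochain sm n f \<and> cyclic_cochain sm n f' \<and> cyclic_cochain sm m g \<longrightarrow>
        cbr \<Theta> n m (\<lambda>xs. f xs + f' xs) g = (\<lambda>xs. cbr \<Theta> n m f g xs + cbr \<Theta> n m f' g xs)
      \<and> cbr \<Theta> n m (\<lambda>xs. c * f xs) g = (\<lambda>xs. c * cbr \<Theta> n m f g xs)
      \<and> cbr \<Theta> m n g (\<lambda>xs. f xs + f' xs) = (\<lambda>xs. cbr \<Theta> m n g f xs + cbr \<Theta> m n g f' xs)
      \<and> cbr \<Theta> m n g (\<lambda>xs. c * f xs) = (\<lambda>xs. c * cbr \<Theta> m n g f xs))
   \<and>
    (\<forall>n m f g. cyc_cocycle sm n f \<and> cyc_cocycle sm m g \<longrightarrow>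
        cyc_cocycle sm (n + m - 1) (cbr \<Theta> n m f g))
   \<and>
    (\<forall>n m f g. cyc_cocycle sm n f \<and> cyc_coboundary sm n f \<and> cyc_cocycle sm m g \<longrightarrow>
        cyc_coboundary sm (n + m - 1) (cbr \<Theta> n m f g)
      \<and> cyc_coboundary sm (n + m - 1) (cbr \<Theta> m n g f))
   \<and>
    (\<forall>n m f g. cyc_cocycle sm n f \<and> cyc_cocycle sm m g \<longrightarrow>
        cyc_coboundary sm (n + m - 1)
          (\<lambda>xs. cbr \<Theta> n m f g xs + (-1) ^ ((n + 1) * (m + 1)) * cbr \<Theta> m n g f xs))
   \<and>
    (\<forall>n m p f g h. cyc_cocycle sm n f \<and> cyc_cocycle sm m g \<and> cyc_cocycle sm p h \<longrightarrow>
        cyc_coboundary sm (n + m + p - 2)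
          (\<lambda>xs. (-1) ^ ((n + 1) * (p + 1)) * cbr \<Theta> n (m + p - 1) f (cbr \<Theta> m p g h) xs
              + (-1) ^ ((m + 1) * (n + 1)) * cbr \<Theta> m (p + n - 1) g (cbr \<Theta> p n h f) xs
              + (-1) ^ ((p + 1) * (m + 1)) * cbr \<Theta> p (n + m - 1) h (cbr \<Theta> n m f g) xs))"
proof (intro conjI allI impI)
  fix n m f f' g c
  assume a: "cyclic_cochain sm n f \<and> cyclic_cochain sm n f' \<and> cyclic_cochain sm m g"
  then have f: "cochain sm n f" and f': "cochain sm n f'" and g: "cochain sm m g" using cyc_cochain by auto
  show "cbr \<Theta> n m (\<lambda>xs. f xs + f' xs) g = (\<lambda>xs. cbr \<Theta> n m f g xs + cbr \<Theta> n m f' g xs)" by (rule bilin(1)[OF f f' g])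
  show "cbr \<Theta> n m (\<lambda>xs. c * f xs) g = (\<lambda>xs. c * cbr \<Theta> n m f g xs)" by (rule bilin(2)[OF f f' g])
  show "cbr \<Theta> m n g (\<lambda>xs. f xs + f' xs) = (\<lambda>xs. cbr \<Theta> m n g f xs + cbr \<Theta> m n g f' xs)" by (rule bilin(3)[OF f f' g])
  show "cbr \<Theta> m n g (\<lambda>xs. c * f xs) = (\<lambda>xs. c * cbr \<Theta> m n g f xs)" by (rule bilin(4)[OF f f' g])
next
  fix n m f g assume "cyc_cocycle sm n f \<and> cyc_cocycle sm m g"
  then show "cyc_cocycle sm (n + m - 1) (cbr \<Theta> n m f g)" using cbr_cocycle by blast
next
  fix n m f g assume a: "cyc_cocycle sm n f \<and> cyc_coboundary sm n f \<and> cyc_cocycle sm m g"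
  then show "cyc_coboundary sm (n + m - 1) (cbr \<Theta> n m f g)" using cbr_descent by blast
  from a show "cyc_coboundary sm (n + m - 1) (cbr \<Theta> m n g f)" using cbr_descent by blast
next
  fix n m f g
  have "cbr \<Theta> n m f g xs + (-1) ^ ((n + 1) * (m + 1)) * cbr \<Theta> m n g f xs = 0" for xs
  proof -
    have "cbr \<Theta> n m f g xs + (-1) ^ ((n + 1) * (m + 1)) * (- ((-1) ^ ((n + 1) * (m + 1)) * cbr \<Theta> n m f g xs)) = 0"
      by (simp add: mult.assoc[symmetric] sgn_sq)
    then show ?thesis by (subst cbr_antisym)
  qed
  then show "cyc_coboundary sm (n + m - 1) (\<lambda>xs. cbr \<Theta> n m f g xs + (-1) ^ ((n + 1) * (m + 1)) * cbr \<Theta> m n g f xs)"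
    unfolding cyc_coboundary_def by simp
next
  fix n m p f g h
  assume a: "cyc_cocycle sm n f \<and> cyc_cocycle sm m g \<and> cyc_cocycle sm p h"
  then have f: "cochain sm n f" and g: "cochain sm m g" and h: "cochain sm p h"
    unfolding cyc_cocycle_def using cyc_cochain by auto
  show "cyc_coboundary sm (n + m + p - 2)
          (\<lambda>xs. (-1) ^ ((n + 1) * (p + 1)) * cbr \<Theta> n (m + p - 1) f (cbr \<Theta> m p g h) xs
              + (-1) ^ ((m + 1) * (n + 1)) * cbr \<Theta> m (p + n - 1) g (cbr \<Theta> p n h f) xs
              + (-1) ^ ((p + 1) * (m + 1)) * cbr \<Theta> p (n + m - 1) h (cbr \<Theta> n m f g) xs)"
    unfolding cyc_coboundary_def using jacobi_final[OF f g h] by simp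
qed

end

theorem corollary5p11:
  fixes sm :: "'k::comm_ring_1 \<Rightarrow> 'a::ring_1 \<Rightarrow> 'a"
    and \<Theta> :: "'a \<Rightarrow> 'a \<Rightarrow> 'k"
  assumes "symm_frobenius sm \<Theta>"
  shows
    \<comment> \<open>bilinearity\<close>
    "(\<forall>n m f f' g c. cyclic_cochain sm n f \<and> cyclic_cochain sm n f' \<and> cyclic_cochain sm m g \<longrightarrow>
        cbr \<Theta> n m (\<lambda>xs. f xs + f' xs) g = (\<lambda>xs. cbr \<Theta> n m f g xs + cbr \<Theta> n m f' g xs)
      \<and> cbr \<Theta> n m (\<lambda>xs. c * f xs) g = (\<lambda>xs. c * cbr \<Theta> n m f g xs)
      \<and> cbr \<Theta> m n g (\<lambda>xs. f xs + f' xs) = (\<lambda>xs. cbr \<Theta> m n g f xs + cbr \<Theta> m n g f' xs)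
      \<and> cbr \<Theta> m n g (\<lambda>xs. c * f xs) = (\<lambda>xs. c * cbr \<Theta> m n g f xs))
   \<and> \<comment> \<open>cyclic cocycles are closed under the bracket (degree n + m - 1)\<close>
    (\<forall>n m f g. cyc_cocycle sm n f \<and> cyc_cocycle sm m g \<longrightarrow>
        cyc_cocycle sm (n + m - 1) (cbr \<Theta> n m f g))
   \<and> \<comment> \<open>the bracket descends to cohomology\<close>
    (\<forall>n m f g. cyc_cocycle sm n f \<and> cyc_coboundary sm n f \<and> cyc_cocycle sm m g \<longrightarrow>
        cyc_coboundary sm (n + m - 1) (cbr \<Theta> n m f g)
      \<and> cyc_coboundary sm (n + m - 1) (cbr \<Theta> m n g f))
   \<and> \<comment> \<open>graded antisymmetry in cohomology: [f,g] = -(-1)^{(n-1)(m-1)} [g,f]\<close>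
    (\<forall>n m f g. cyc_cocycle sm n f \<and> cyc_cocycle sm m g \<longrightarrow>
        cyc_coboundary sm (n + m - 1)
          (\<lambda>xs. cbr \<Theta> n m f g xs + (-1) ^ ((n + 1) * (m + 1)) * cbr \<Theta> m n g f xs))
   \<and> \<comment> \<open>graded Jacobi identity in cohomology\<close>
    (\<forall>n m p f g h. cyc_cocycle sm n f \<and> cyc_cocycle sm m g \<and> cyc_cocycle sm p h \<longrightarrow>
        cyc_coboundary sm (n + m + p - 2)
          (\<lambda>xs. (-1) ^ ((n + 1) * (p + 1)) * cbr \<Theta> n (m + p - 1) f (cbr \<Theta> m p g h) xs
              + (-1) ^ ((m + 1) * (n + 1)) * cbr \<Theta> m (p + n - 1) g (cbr \<Theta> p n h f) xs
              + (-1) ^ ((p + 1) * (m + 1)) * cbr \<Theta> p (n + m - 1) h (cbr \<Theta> n m f g) xs))"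
  proof -
  have "frob sm \<Theta>" unfolding frob_def frob_axioms_def hoch_def
    using assms by (simp add: symm_frobenius_def)
  then show ?thesis by (rule frob.main)
qed

end
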